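(* Let $N=2$. Let $\Omega\subset\mathbb{R}^2$ be open, connected and simply connected, with light-cone coordinates $(\xi_L,\xi_R)$, and let $f:\Omega\to\mathbb{C}^2\setminus\{0\}$ be a smooth solution of the Euler--Lagrange equations of the $\mathbb{C}P^{1}$ sigma model on Minkowski space, $$P\Big\{\partial_L\partial_R f-\frac{1}{f^\dagger f}\big((f^\dagger\partial_R f)\,\partial_L f+(f^\dagger\partial_L f)\,\partial_R f\big)\Big\}=0,\qquad P={\bf 1}-\frac{f\otimes f^\dagger}{f^\dagger f},$$ such that the induced metric $G$ of the associated surface $X:\Omega\to su(2)\simeq\mathbb{R}^3$ (defined by $\partial_L X=[\partial_L P,P]$, $\partial_R X=-[\partial_R P,P]$) satisfies $\det G\neq 0$. Then the Gaussian curvature of the surface is constant and equal to $K=-4$; in particular the surface has no umbilical points.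
   Context: Minkowski metric $d\xi_L\,d\xi_R$ with $\xi_L=\xi^1+\xi^2$, $\xi_R=\xi^1-\xi^2$, $\partial_L=\frac12(\partial_{\xi^1}+\partial_{\xi^2})$, $\partial_R=\frac12(\partial_{\xi^1}-\partial_{\xi^2})$. $su(2)$ is identified with $\mathbb{R}^3$ via $(A,B)=-\frac12\mathrm{tr}(AB)$. For a solution $f$, $\partial_L[\partial_R P,P]+\partial_R[\partial_L P,P]=0$, so $X$ exists (up to an additive constant). The induced metric is $G_{BD}=(\partial_B X,\partial_D X)$, $B,D\in\{L,R\}$, i.e. $G_{LL}=J_L=\frac{\partial_L f^\dagger P\partial_L f}{f^\dagger f}$, $G_{RR}=J_R=\frac{\partial_R f^\dagger P\partial_R f}{f^\dagger f}$, $G_{LR}=-\Re\frac{\partial_R f^\dagger P\partial_L f}{f^\dagger f}$, and the Gaussian curvature is $K=\frac{1}{\sqrt{J_LJ_R-G_{LR}^2}}\,\partial_R\Big(\frac{\partial_L G_{LR}-\frac12 G_{LR}\partial_L(\ln J_L)}{\sqrt{J_LJ_R-G_{LR}^2}}\Big)$. *)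

theory Defs
  imports "HOL-Analysis.Analysis"
begin

primrec Ck :: "nat \<Rightarrow> ('a::real_normed_vector \<Rightarrow> 'b::real_normed_vector) \<Rightarrow> 'a set \<Rightarrow> bool" where
  "Ck 0 g S = continuous_on S g"
| "Ck (Suc k) g S = (g differentiable_on S \<and> (\<forall>v. Ck k (\<lambda>x. frechet_derivative g (at x) v) S))"

definition smooth_on :: "'a::real_normed_vector set \<Rightarrow> ('a \<Rightarrow> 'b::real_normed_vector) \<Rightarrow> bool" where
  "smooth_on S g \<longleftrightarrow> (\<forall>k. Ck k g S)"

text \<open>Points of R^2 are pairs (xi1, xi2); xi_L = xi1 + xi2, xi_R = xi1 - xi2.\<close>

definition d1 :: "(real \<times> real \<Rightarrow> 'b::real_normed_vector) \<Rightarrow> real \<times> real \<Rightarrow> 'b" where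
  "d1 g x = frechet_derivative g (at x) (1, 0)"

definition d2 :: "(real \<times> real \<Rightarrow> 'b::real_normed_vector) \<Rightarrow> real \<times> real \<Rightarrow> 'b" where
  "d2 g x = frechet_derivative g (at x) (0, 1)"

definition dL :: "(real \<times> real \<Rightarrow> 'b::real_normed_vector) \<Rightarrow> real \<times> real \<Rightarrow> 'b" where
  "dL g x = (1/2) *\<^sub>R (d1 g x + d2 g x)"

definition dR :: "(real \<times> real \<Rightarrow> 'b::real_normed_vector) \<Rightarrow> real \<times> real \<Rightarrow> 'b" where
  "dR g x = (1/2) *\<^sub>R (d1 g x - d2 g x)"

definition herm :: "complex^2 \<Rightarrow> complex^2 \<Rightarrow> complex" where
  "herm u v = (\<Sum>i\<in>UNIV. cnj (u $ i) * v $ i)"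

definition outer :: "complex^2 \<Rightarrow> complex^2 \<Rightarrow> complex^2^2" where
  "outer u v = (\<chi> i j. u $ i * cnj (v $ j))"

definition cmat_scale :: "complex \<Rightarrow> complex^2^2 \<Rightarrow> complex^2^2" where
  "cmat_scale c A = (\<chi> i j. c * A $ i $ j)"

definition cvec_scale :: "complex \<Rightarrow> complex^2 \<Rightarrow> complex^2" where
  "cvec_scale c v = (\<chi> i. c * v $ i)"

definition proj :: "complex^2 \<Rightarrow> complex^2^2" where
  "proj v = mat 1 - cmat_scale (1 / herm v v) (outer v v)"

definition comm :: "complex^2^2 \<Rightarrow> complex^2^2 \<Rightarrow> complex^2^2" where
  "comm A B = A ** B - B ** A"

text \<open>The identification su(2) = R^3 via (A,B) = -1/2 tr(AB) (real part taken; tr(AB) is real on su(2)).\<close>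
definition su2_inner :: "complex^2^2 \<Rightarrow> complex^2^2 \<Rightarrow> real" where
  "su2_inner A B = - (1/2) * Re (\<Sum>i\<in>UNIV. (A ** B) $ i $ i)"

definition CP1_EL :: "(real \<times> real \<Rightarrow> complex^2) \<Rightarrow> real \<times> real \<Rightarrow> bool" where
  "CP1_EL f x \<longleftrightarrow>
     proj (f x) *v
       (dL (dR f) x
        - cvec_scale (1 / herm (f x) (f x))
            (cvec_scale (herm (f x) (dR f x)) (dL f x)
             + cvec_scale (herm (f x) (dL f x)) (dR f x))) = 0"

definition Pf :: "(real \<times> real \<Rightarrow> complex^2) \<Rightarrow> real \<times> real \<Rightarrow> complex^2^2" where
  "Pf f x = proj (f x)"

definition dLX :: "(real \<times> real \<Rightarrow> complex^2) \<Rightarrow> real \<times> real \<Rightarrow> complex^2^2" where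
  "dLX f x = comm (dL (Pf f) x) (Pf f x)"

definition dRX :: "(real \<times> real \<Rightarrow> complex^2) \<Rightarrow> real \<times> real \<Rightarrow> complex^2^2" where
  "dRX f x = - comm (dR (Pf f) x) (Pf f x)"

definition G_LL :: "(real \<times> real \<Rightarrow> complex^2) \<Rightarrow> real \<times> real \<Rightarrow> real" where
  "G_LL f x = su2_inner (dLX f x) (dLX f x)"

definition G_RR :: "(real \<times> real \<Rightarrow> complex^2) \<Rightarrow> real \<times> real \<Rightarrow> real" where
  "G_RR f x = su2_inner (dRX f x) (dRX f x)"

definition G_LR :: "(real \<times> real \<Rightarrow> complex^2) \<Rightarrow> real \<times> real \<Rightarrow> real" where
  "G_LR f x = su2_inner (dLX f x) (dRX f x)"

definition detG :: "(real \<times> real \<Rightarrow> complex^2) \<Rightarrow> real \<times> real \<Rightarrow> real" where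
  "detG f x = G_LL f x * G_RR f x - (G_LR f x)\<^sup>2"

definition gauss_curv :: "(real \<times> real \<Rightarrow> complex^2) \<Rightarrow> real \<times> real \<Rightarrow> real" where
  "gauss_curv f x =
     1 / sqrt (detG f x) *
     dR (\<lambda>y. (dL (G_LR f) y - 1/2 * G_LR f y * dL (\<lambda>z. ln (G_LL f z)) y) / sqrt (detG f y)) x"

end

theory Submission
  imports Defs
begin

lemma Ck_Suc_mono: "Ck (Suc k) g S \<Longrightarrow> Ck k g S"
proof (induction k arbitrary: g)
  case 0 then show ?case by (auto simp: differentiable_imp_continuous_on)
next
  case (Suc k) then show ?case by auto
qed

lemma Ck_SucD_has:
  assumes "Ck (Suc k) g S" "open S" "x \<in> S"
  shows "(g has_derivative frechet_derivative g (at x)) (at x)"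
  using assms by (metis Ck.simps(2) differentiable_on_eq_differentiable_at frechet_derivative_works)

lemma Ck_SucD_fd: "Ck (Suc k) g S \<Longrightarrow> Ck k (\<lambda>x. frechet_derivative g (at x) v) S"
  by auto

lemma Ck_cong:
  assumes "open S" "\<And>x. x \<in> S \<Longrightarrow> g x = h x" "Ck k g S"
  shows "Ck k h S"
  using assms
proof (induction k arbitrary: g h)
  case 0 then show ?case using continuous_on_cong by force
next
  case (Suc k)
  have d: "\<And>x. x \<in> S \<Longrightarrow> g differentiable at x"
    using Suc.prems differentiable_on_eq_differentiable_at by auto
  have fe: "\<And>x. x \<in> S \<Longrightarrow> frechet_derivative g (at x) = frechet_derivative h (at x)"
    using frechet_derivative_transform_within_open[OF d] Suc.prems by blast
  have "h differentiable_on S"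
    unfolding differentiable_on_eq_differentiable_at[OF \<open>open S\<close>]
  proof
    fix x assume "x \<in> S"
    then have "(g has_derivative frechet_derivative g (at x)) (at x)"
      using d frechet_derivative_works by blast
    then have "(h has_derivative frechet_derivative g (at x)) (at x)"
      using has_derivative_transform_within_open Suc.prems \<open>x \<in> S\<close> by blast
    then show "h differentiable at x" by (auto simp: differentiable_def)
  qed
  moreover have "Ck k (\<lambda>x. frechet_derivative h (at x) v) S" for v
    using Suc.IH[of "\<lambda>x. frechet_derivative g (at x) v" "\<lambda>x. frechet_derivative h (at x) v"] Suc.prems fe
    by auto
  ultimately show ?case by simp
qed

lemma Ck_Suc_intro:
  assumes "open S" "\<And>x. x \<in> S \<Longrightarrow> (g has_derivative g' x) (at x)"
    "\<And>v. Ck k (\<lambda>x. g' x v) S"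
  shows "Ck (Suc k) g S"
proof -
  have "g differentiable_on S"
    unfolding differentiable_on_eq_differentiable_at[OF assms(1)] differentiable_def using assms(2) by blast
  moreover have "Ck k (\<lambda>x. frechet_derivative g (at x) v) S" for v
    by (rule Ck_cong[OF assms(1) _ assms(3)[of v]]) (use assms(2) frechet_derivative_at in metis)
  ultimately show ?thesis by simp
qed

lemma Ck_const: "Ck k (\<lambda>x. c) S"
proof (induction k arbitrary: c)
  case 0 then show ?case by simp
next
  case (Suc k) then show ?case by (simp add: differentiable_on_const)
qed

lemma Ck_linear:
  assumes "bounded_linear L" "open S" "Ck k g S"
  shows "Ck k (\<lambda>x. L (g x)) S"
  using assms(3)
proof (induction k arbitrary: g)
  case 0 then show ?case
    by (simp add: assms(1) bounded_linear.continuous_on continuous_on_id)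
next
  case (Suc k)
  show ?case
  proof (rule Ck_Suc_intro[OF assms(2)])
    fix x assume "x \<in> S"
    show "((\<lambda>x. L (g x)) has_derivative (\<lambda>v. L (frechet_derivative g (at x) v))) (at x)"
      by (rule bounded_linear.has_derivative[OF assms(1) Ck_SucD_has[OF Suc.prems assms(2) \<open>x \<in> S\<close>]])
  next
    fix v show "Ck k (\<lambda>x. L (frechet_derivative g (at x) v)) S"
      using Suc.IH Suc.prems by auto
  qed
qed

lemma Ck_add:
  assumes "open S" "Ck k g S" "Ck k h S"
  shows "Ck k (\<lambda>x. g x + h x) S"
  using assms(2,3)
proof (induction k arbitrary: g h)
  case 0 then show ?case by (simp add: continuous_on_add)
next
  case (Suc k)
  show ?case
  proof (rule Ck_Suc_intro[OF assms(1)])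
    fix x assume "x \<in> S"
    show "((\<lambda>x. g x + h x) has_derivative
          (\<lambda>v. frechet_derivative g (at x) v + frechet_derivative h (at x) v)) (at x)"
      by (rule has_derivative_add[OF Ck_SucD_has[OF Suc.prems(1) assms(1) \<open>x \<in> S\<close>]
            Ck_SucD_has[OF Suc.prems(2) assms(1) \<open>x \<in> S\<close>]])
  next
    fix v show "Ck k (\<lambda>x. frechet_derivative g (at x) v + frechet_derivative h (at x) v) S"
      using Suc.IH Suc.prems by auto
  qed
qed

lemma Ck_bilinear:
  fixes prod :: "'b::real_normed_vector \<Rightarrow> 'c::real_normed_vector \<Rightarrow> 'd::real_normed_vector"
    and g :: "'a::real_normed_vector \<Rightarrow> 'b" and h :: "'a \<Rightarrow> 'c"
  assumes bb: "bounded_bilinear prod" and S: "open S"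
  shows "Ck k g S \<Longrightarrow> Ck k h S \<Longrightarrow> Ck k (\<lambda>x. prod (g x) (h x)) S"
proof (induction k arbitrary: g h)
  case 0 then show ?case by (simp add: bounded_bilinear.continuous_on[OF bb])
next
  case (Suc k)
  show ?case
  proof (rule Ck_Suc_intro[OF S])
    fix x assume "x \<in> S"
    show "((\<lambda>x. prod (g x) (h x)) has_derivative
          (\<lambda>v. prod (g x) (frechet_derivative h (at x) v) + prod (frechet_derivative g (at x) v) (h x))) (at x)"
      by (rule bounded_bilinear.FDERIV[OF bb Ck_SucD_has[OF Suc.prems(1) S \<open>x \<in> S\<close>]
            Ck_SucD_has[OF Suc.prems(2) S \<open>x \<in> S\<close>]])
  next
    fix v
    have gk: "Ck k g S" "Ck k h S" using Suc.prems Ck_Suc_mono by blast+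
    have fk: "Ck k (\<lambda>x. frechet_derivative g (at x) v) S" "Ck k (\<lambda>x. frechet_derivative h (at x) v) S"
      using Suc.prems by auto
    show "Ck k (\<lambda>x. prod (g x) (frechet_derivative h (at x) v) + prod (frechet_derivative g (at x) v) (h x)) S"
      by (rule Ck_add[OF S Suc.IH[OF gk(1) fk(2)] Suc.IH[OF fk(1) gk(2)]])
  qed
qed

lemma Ck_inverse:
  fixes g :: "'a::real_normed_vector \<Rightarrow> 'b::real_normed_field"
  assumes S: "open S" and nz: "\<And>x. x \<in> S \<Longrightarrow> g x \<noteq> 0"
  shows "Ck k g S \<Longrightarrow> Ck k (\<lambda>x. inverse (g x)) S"
proof (induction k)
  case 0 then show ?case using nz by (auto intro!: continuous_on_inverse)
next
  case (Suc k)
  show ?case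
  proof (rule Ck_Suc_intro[OF S])
    fix x assume "x \<in> S"
    show "((\<lambda>x. inverse (g x)) has_derivative
          (\<lambda>v. - (inverse (g x) * frechet_derivative g (at x) v * inverse (g x)))) (at x)"
      by (rule Deriv.has_derivative_inverse[OF nz[OF \<open>x \<in> S\<close>] Ck_SucD_has[OF Suc.prems S \<open>x \<in> S\<close>]])
  next
    fix v
    have a: "Ck k (\<lambda>x. inverse (g x)) S" using Suc.IH Suc.prems Ck_Suc_mono by blast
    have b: "Ck k (\<lambda>x. frechet_derivative g (at x) v) S" using Suc.prems by auto
    have "Ck k (\<lambda>x. inverse (g x) * frechet_derivative g (at x) v * inverse (g x)) S"
      using Ck_bilinear[OF bounded_bilinear_mult S, OF Ck_bilinear[OF bounded_bilinear_mult S, OF a b] a] .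
    from Ck_linear[OF bounded_linear_minus[OF bounded_linear_ident] S this]
    show "Ck k (\<lambda>x. - (inverse (g x) * frechet_derivative g (at x) v * inverse (g x))) S" .
  qed
qed

lemma Ck_sum:
  assumes S: "open S" and fin: "finite I"
  shows "(\<And>i. i \<in> I \<Longrightarrow> Ck k (g i) S) \<Longrightarrow> Ck k (\<lambda>x. \<Sum>i\<in>I. g i x) S"
  using fin
proof (induction I rule: finite_induct)
  case empty then show ?case by (simp add: Ck_const)
next
  case (insert i I) then show ?case by (simp add: Ck_add[OF S])
qed

lemma bounded_linear_axis: "bounded_linear (\<lambda>c::'a::real_normed_vector. axis i c)"
proof (rule bounded_linear_intro[where K=1])
  show "axis i (x + y) = axis i x + axis i y" for x y :: 'a
    by (simp add: vec_eq_iff axis_def)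
  show "axis i (r *\<^sub>R x) = r *\<^sub>R axis i x" for r and x :: 'a
    by (simp add: vec_eq_iff axis_def)
  show "norm (axis i x) \<le> norm x * 1" for x :: 'a
  proof -
    have "(\<Sum>j\<in>UNIV. (norm (axis i x $ j))\<^sup>2) = (\<Sum>j\<in>UNIV. if j = i then (norm x)\<^sup>2 else 0)"
      by (rule sum.cong) (auto simp: axis_def)
    also have "\<dots> = (norm x)\<^sup>2" by simp
    finally show ?thesis unfolding norm_vec_def L2_set_def by simp
  qed
qed

lemma vec_lambda_sum_axis: "(\<chi> i. g i) = (\<Sum>i\<in>UNIV. axis i (g i :: 'a::comm_monoid_add))"
  by (simp add: vec_eq_iff axis_def sum_component if_distrib cong: if_cong)
lemma Ck_vec:
  assumes S: "open S" and "\<And>i. Ck k (g i) S"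
  shows "Ck k (\<lambda>x. \<chi> i. g i x) S"
  unfolding vec_lambda_sum_axis
  by (rule Ck_sum[OF S finite_class.finite_UNIV]) (rule Ck_linear[OF bounded_linear_axis S assms(2)])

lemma smooth_Ck: "smooth_on S g \<Longrightarrow> Ck k g S"
  by (simp add: smooth_on_def)

lemma smooth_has:
  "smooth_on S g \<Longrightarrow> open S \<Longrightarrow> x \<in> S \<Longrightarrow> (g has_derivative frechet_derivative g (at x)) (at x)"
  using Ck_SucD_has smooth_Ck by blast

lemma smooth_differentiable:
  "smooth_on S g \<Longrightarrow> open S \<Longrightarrow> x \<in> S \<Longrightarrow> g differentiable (at x)"
  using smooth_has differentiableI by blast

lemma smooth_fd: "smooth_on S g \<Longrightarrow> smooth_on S (\<lambda>x. frechet_derivative g (at x) v)"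
  unfolding smooth_on_def using Ck_SucD_fd by blast

lemma smooth_cong: "open S \<Longrightarrow> (\<And>x. x \<in> S \<Longrightarrow> g x = h x) \<Longrightarrow> smooth_on S g \<Longrightarrow> smooth_on S h"
  unfolding smooth_on_def using Ck_cong by blast

lemma smooth_const: "smooth_on S (\<lambda>x. c)"
  unfolding smooth_on_def using Ck_const by blast

lemma smooth_add: "open S \<Longrightarrow> smooth_on S g \<Longrightarrow> smooth_on S h \<Longrightarrow> smooth_on S (\<lambda>x. g x + h x)"
  unfolding smooth_on_def using Ck_add by blast

lemma smooth_linear: "bounded_linear L \<Longrightarrow> open S \<Longrightarrow> smooth_on S g \<Longrightarrow> smooth_on S (\<lambda>x. L (g x))"
  unfolding smooth_on_def using Ck_linear by blast

lemma smooth_bilinear: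
  fixes prod :: "'b::real_normed_vector \<Rightarrow> 'c::real_normed_vector \<Rightarrow> 'd::real_normed_vector"
    and g :: "'a::real_normed_vector \<Rightarrow> 'b" and h :: "'a \<Rightarrow> 'c"
  shows "bounded_bilinear prod \<Longrightarrow> open S \<Longrightarrow> smooth_on S g \<Longrightarrow> smooth_on S h \<Longrightarrow>
    smooth_on S (\<lambda>x. prod (g x) (h x))"
  unfolding smooth_on_def using Ck_bilinear by blast

lemma smooth_inverse:
  fixes g :: "'a::real_normed_vector \<Rightarrow> 'b::real_normed_field"
  shows "open S \<Longrightarrow> (\<And>x. x \<in> S \<Longrightarrow> g x \<noteq> 0) \<Longrightarrow> smooth_on S g \<Longrightarrow> smooth_on S (\<lambda>x. inverse (g x))"
  unfolding smooth_on_def using Ck_inverse by blast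

lemma smooth_vec: "open S \<Longrightarrow> (\<And>i. smooth_on S (g i)) \<Longrightarrow> smooth_on S (\<lambda>x. \<chi> i. g i x)"
  unfolding smooth_on_def using Ck_vec by blast

lemma smooth_mult:
  fixes g h :: "'a::real_normed_vector \<Rightarrow> 'b::real_normed_algebra"
  shows "open S \<Longrightarrow> smooth_on S g \<Longrightarrow> smooth_on S h \<Longrightarrow> smooth_on S (\<lambda>x. g x * h x)"
  using smooth_bilinear[OF bounded_bilinear_mult] by blast

lemma smooth_scaleR:
  "open S \<Longrightarrow> smooth_on S g \<Longrightarrow> smooth_on S h \<Longrightarrow> smooth_on S (\<lambda>x. g x *\<^sub>R h x)"
  using smooth_bilinear[OF bounded_bilinear_scaleR] by blast

lemma smooth_inner:
  "open S \<Longrightarrow> smooth_on S g \<Longrightarrow> smooth_on S h \<Longrightarrow> smooth_on S (\<lambda>x. inner (g x) (h x))"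
  using smooth_bilinear[OF bounded_bilinear_inner] by blast

lemma smooth_minus: "open S \<Longrightarrow> smooth_on S g \<Longrightarrow> smooth_on S (\<lambda>x. - g x)"
  using smooth_linear[OF bounded_linear_minus[OF bounded_linear_ident]] by blast

lemma smooth_diff: "open S \<Longrightarrow> smooth_on S g \<Longrightarrow> smooth_on S h \<Longrightarrow> smooth_on S (\<lambda>x. g x - h x)"
  using smooth_add[of S g "\<lambda>x. - h x"] smooth_minus by auto

lemma smooth_cnj: "open S \<Longrightarrow> smooth_on S g \<Longrightarrow> smooth_on S (\<lambda>x. cnj (g x))"
  using smooth_linear[OF bounded_linear_cnj] by blast

lemma smooth_nth: "open S \<Longrightarrow> smooth_on S g \<Longrightarrow> smooth_on S (\<lambda>x. g x $ i)"
  using smooth_linear[OF bounded_linear_vec_nth] by blast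

lemma smooth_divide:
  fixes g h :: "'a::real_normed_vector \<Rightarrow> 'b::real_normed_field"
  shows "open S \<Longrightarrow> (\<And>x. x \<in> S \<Longrightarrow> h x \<noteq> 0) \<Longrightarrow> smooth_on S g \<Longrightarrow> smooth_on S h \<Longrightarrow> smooth_on S (\<lambda>x. g x / h x)"
  unfolding divide_inverse using smooth_mult smooth_inverse by blast

lemma dL_has: "(g has_derivative g') (at x) \<Longrightarrow> dL g x = g' (1/2, 1/2)"
proof -
  assume a: "(g has_derivative g') (at x)"
  then have e: "frechet_derivative g (at x) = g'" using frechet_derivative_at by metis
  have l: "linear g'" using a has_derivative_linear by blast
  have 1: "g' (1,1) = g' (1,0) + g' (0,1)" using linear_add[OF l, of "(1,0)" "(0,1)"] by simp
  have 2: "g' (1/2,1/2) = (1/2) *\<^sub>R g' (1,1)" using linear_scale[OF l, of "1/2" "(1,1)"] by simp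
  show ?thesis unfolding dL_def d1_def d2_def e 2 1 ..
qed

lemma dR_has: "(g has_derivative g') (at x) \<Longrightarrow> dR g x = g' (1/2, -1/2)"
proof -
  assume a: "(g has_derivative g') (at x)"
  then have e: "frechet_derivative g (at x) = g'" using frechet_derivative_at by metis
  have l: "linear g'" using a has_derivative_linear by blast
  have 1: "g' (1,-1) = g' (1,0) - g' (0,1)" using linear_diff[OF l, of "(1,0)" "(0,1)"] by simp
  have 2: "g' (1/2,-1/2) = (1/2) *\<^sub>R g' (1,-1)" using linear_scale[OF l, of "1/2" "(1,-1)"] by simp
  show ?thesis unfolding dR_def d1_def d2_def e 2 1 ..
qed

lemma fd_cong:
  assumes "open S" "x \<in> S" "\<And>y. y \<in> S \<Longrightarrow> g y = h y"
  shows "frechet_derivative g (at x) = frechet_derivative h (at x)"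
proof -
  have "(\<lambda>D. (g has_derivative D) (at x)) = (\<lambda>D. (h has_derivative D) (at x))"
  proof (rule ext, rule iffI)
    fix D assume "(g has_derivative D) (at x)"
    then show "(h has_derivative D) (at x)" using has_derivative_transform_within_open assms by blast
  next
    fix D assume "(h has_derivative D) (at x)"
    then show "(g has_derivative D) (at x)"
      using has_derivative_transform_within_open[of h D x UNIV S g] assms by auto
  qed
  then show ?thesis unfolding frechet_derivative_def by simp
qed

lemma dL_cong:
  assumes "open S" "x \<in> S" "\<And>y. y \<in> S \<Longrightarrow> g y = h y" shows "dL g x = dL h x"
  using fd_cong[OF assms] by (simp add: dL_def d1_def d2_def)

lemma dR_cong:
  assumes "open S" "x \<in> S" "\<And>y. y \<in> S \<Longrightarrow> g y = h y" shows "dR g x = dR h x"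
  using fd_cong[OF assms] by (simp add: dR_def d1_def d2_def)

lemma dL_fd: "smooth_on S g \<Longrightarrow> open S \<Longrightarrow> x \<in> S \<Longrightarrow> dL g x = frechet_derivative g (at x) (1/2,1/2)"
  by (rule dL_has[OF smooth_has])

lemma dR_fd: "smooth_on S g \<Longrightarrow> open S \<Longrightarrow> x \<in> S \<Longrightarrow> dR g x = frechet_derivative g (at x) (1/2,-1/2)"
  by (rule dR_has[OF smooth_has])

lemma smooth_dL:
  assumes sm: "smooth_on S g" and S: "open S" shows "smooth_on S (dL g)"
proof (rule smooth_cong[OF S _ smooth_fd[OF sm, of "(1/2,1/2)"]])
  fix x assume "x \<in> S"
  then show "frechet_derivative g (at x) (1/2,1/2) = dL g x" by (rule dL_fd[OF sm S, symmetric])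
qed

lemma smooth_dR:
  assumes sm: "smooth_on S g" and S: "open S" shows "smooth_on S (dR g)"
proof (rule smooth_cong[OF S _ smooth_fd[OF sm, of "(1/2,-1/2)"]])
  fix x assume "x \<in> S"
  then show "frechet_derivative g (at x) (1/2,-1/2) = dR g x" by (rule dR_fd[OF sm S, symmetric])
qed

lemma mvi:
  fixes ch :: "real \<Rightarrow> 'b::real_normed_vector"
  assumes h: "0 \<le> h"
    and d: "\<And>t. t \<in> {0..h} \<Longrightarrow> (ch has_vector_derivative ch' t) (at t within {0..h})"
    and b: "\<And>t. t \<in> {0..h} \<Longrightarrow> norm (ch' t) \<le> B"
  shows "norm (ch h - ch 0) \<le> 3 * B * h"
proof -
  have 0: "0 \<in> {0..h}" using h by simp
  have seg: "closed_segment 0 h \<subseteq> {0..h}" using h by (simp add: closed_segment_eq_real_ivl)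
  have B2: "norm (ch' t - ch' 0) \<le> 2*B" if "t \<in> {0..h}" for t
    using b[OF that] b[OF 0] norm_triangle_ineq4[of "ch' t" "ch' 0"] by linarith
  have "norm (ch h - ch 0 - (h - 0) *\<^sub>R ch' 0) \<le> norm (h - 0) * (2*B)"
    by (rule vector_differentiable_bound_linearization[OF d seg B2 0])
  then have 1: "norm (ch h - ch 0 - h *\<^sub>R ch' 0) \<le> h * (2*B)" using h by simp
  have 2: "norm (h *\<^sub>R ch' 0) \<le> h * B" using b[OF 0] h by (simp add: mult_left_mono)
  have "ch h - ch 0 = (ch h - ch 0 - h *\<^sub>R ch' 0) + h *\<^sub>R ch' 0" by simp
  then have "norm (ch h - ch 0) \<le> norm (ch h - ch 0 - h *\<^sub>R ch' 0) + norm (h *\<^sub>R ch' 0)"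
    by (metis norm_triangle_ineq)
  then show ?thesis using 1 2 by (simp add: algebra_simps)
qed

lemma delta_bound:
  fixes g :: "'a::real_normed_vector \<Rightarrow> 'b::real_normed_vector"
  assumes h: "0 \<le> h"
    and inS: "\<And>s t. s \<in> {0..h} \<Longrightarrow> t \<in> {0..h} \<Longrightarrow> x + t *\<^sub>R u + s *\<^sub>R v \<in> S"
    and dg: "\<And>y. y \<in> S \<Longrightarrow> (g has_derivative Dg y) (at y)"
    and dphi: "\<And>y. y \<in> S \<Longrightarrow> ((\<lambda>z. Dg z v) has_derivative DD y) (at y)"
    and bnd: "\<And>s t. s \<in> {0..h} \<Longrightarrow> t \<in> {0..h} \<Longrightarrow> norm (DD (x + t *\<^sub>R u + s *\<^sub>R v) u - A) \<le> \<epsilon>"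
  shows "norm (g (x + h *\<^sub>R u + h *\<^sub>R v) - g (x + h *\<^sub>R u) - g (x + h *\<^sub>R v) + g x - (h*h) *\<^sub>R A)
           \<le> 9 * \<epsilon> * h * h"
proof -
  have inner: "norm (Dg (x + h *\<^sub>R u + s *\<^sub>R v) v - Dg (x + s *\<^sub>R v) v - h *\<^sub>R A) \<le> 3 * \<epsilon> * h"
    if s: "s \<in> {0..h}" for s
  proof -
    define ch where "ch t = Dg (x + t *\<^sub>R u + s *\<^sub>R v) v - t *\<^sub>R A" for t
    have "(ch has_vector_derivative (DD (x + t *\<^sub>R u + s *\<^sub>R v) u - A)) (at t within {0..h})"
      if t: "t \<in> {0..h}" for t
    proof -
      let ?y = "x + t *\<^sub>R u + s *\<^sub>R v"
      have l: "((\<lambda>t. x + t *\<^sub>R u + s *\<^sub>R v) has_derivative (\<lambda>d. d *\<^sub>R u)) (at t within {0..h})"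
        by (auto intro!: derivative_eq_intros)
      have c: "((\<lambda>t. Dg (x + t *\<^sub>R u + s *\<^sub>R v) v) has_derivative (\<lambda>d. DD ?y (d *\<^sub>R u))) (at t within {0..h})"
        using has_derivative_compose[OF l dphi[OF inS[OF s t]]] .
      have lin: "linear (DD ?y)" using dphi[OF inS[OF s t]] has_derivative_linear by blast
      have "(ch has_derivative (\<lambda>d. DD ?y (d *\<^sub>R u) - d *\<^sub>R A)) (at t within {0..h})"
        unfolding ch_def by (intro derivative_intros c)
      moreover have "(\<lambda>d. DD ?y (d *\<^sub>R u) - d *\<^sub>R A) = (\<lambda>d. d *\<^sub>R (DD ?y u - A))"
        using lin by (simp add: fun_eq_iff linear_scale scaleR_diff_right)
      ultimately show ?thesis unfolding has_vector_derivative_def by simp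
    qed
    moreover have "norm (DD (x + t *\<^sub>R u + s *\<^sub>R v) u - A) \<le> \<epsilon>" if "t \<in> {0..h}" for t
      using bnd[OF s that] .
    ultimately have "norm (ch h - ch 0) \<le> 3 * \<epsilon> * h" by (intro mvi[OF h]) auto
    then show ?thesis unfolding ch_def by (simp add: algebra_simps)
  qed
  define ps where "ps s = g (x + h *\<^sub>R u + s *\<^sub>R v) - g (x + s *\<^sub>R v) - s *\<^sub>R (h *\<^sub>R A)" for s
  have "(ps has_vector_derivative (Dg (x + h *\<^sub>R u + s *\<^sub>R v) v - Dg (x + s *\<^sub>R v) v - h *\<^sub>R A))
          (at s within {0..h})" if s: "s \<in> {0..h}" for s
  proof -
    let ?y1 = "x + h *\<^sub>R u + s *\<^sub>R v" and ?y2 = "x + s *\<^sub>R v"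
    have y1: "?y1 \<in> S" using inS[OF s, of h] h by simp
    have y2: "?y2 \<in> S" using inS[OF s, of 0] h by simp
    have l1: "((\<lambda>s. x + h *\<^sub>R u + s *\<^sub>R v) has_derivative (\<lambda>d. d *\<^sub>R v)) (at s within {0..h})"
      by (auto intro!: derivative_eq_intros)
    have l2: "((\<lambda>s. x + s *\<^sub>R v) has_derivative (\<lambda>d. d *\<^sub>R v)) (at s within {0..h})"
      by (auto intro!: derivative_eq_intros)
    note c1 = has_derivative_compose[OF l1 dg[OF y1]]
    note c2 = has_derivative_compose[OF l2 dg[OF y2]]
    have lin1: "linear (Dg ?y1)" using dg[OF y1] has_derivative_linear by blast
    have lin2: "linear (Dg ?y2)" using dg[OF y2] has_derivative_linear by blast
    have "(ps has_derivative (\<lambda>d. Dg ?y1 (d *\<^sub>R v) - Dg ?y2 (d *\<^sub>R v) - d *\<^sub>R (h *\<^sub>R A))) (at s within {0..h})"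
      unfolding ps_def by (intro derivative_intros c1 c2)
    moreover have "(\<lambda>d. Dg ?y1 (d *\<^sub>R v) - Dg ?y2 (d *\<^sub>R v) - d *\<^sub>R (h *\<^sub>R A))
        = (\<lambda>d. d *\<^sub>R (Dg ?y1 v - Dg ?y2 v - h *\<^sub>R A))"
      using lin1 lin2 by (simp add: fun_eq_iff linear_scale scaleR_diff_right)
    ultimately show ?thesis unfolding has_vector_derivative_def by simp
  qed
  then have "norm (ps h - ps 0) \<le> 3 * (3 * \<epsilon> * h) * h"
    by (intro mvi[OF h]) (auto intro: inner)
  then show ?thesis unfolding ps_def by (simp add: algebra_simps)
qed

lemma fd_sym:
  fixes g :: "'a::real_normed_vector \<Rightarrow> 'b::real_normed_vector"
  assumes S: "open S" and x: "x \<in> S" and sm: "smooth_on S g"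
  shows "frechet_derivative (\<lambda>y. frechet_derivative g (at y) v) (at x) u
       = frechet_derivative (\<lambda>y. frechet_derivative g (at y) u) (at x) v"
proof -
  define D2 where "D2 y p q = frechet_derivative (\<lambda>z. frechet_derivative g (at z) q) (at y) p" for y p q
  have dg: "\<And>y. y \<in> S \<Longrightarrow> (g has_derivative frechet_derivative g (at y)) (at y)"
    using smooth_has[OF sm S] by blast
  have dphi: "\<And>y q. y \<in> S \<Longrightarrow> ((\<lambda>z. frechet_derivative g (at z) q) has_derivative (\<lambda>p. D2 y p q)) (at y)"
    unfolding D2_def using smooth_has[OF smooth_fd[OF sm] S] by blast
  have cont: "continuous_on S (\<lambda>y. D2 y p q)" for p q
    unfolding D2_def using smooth_Ck[OF smooth_fd[OF smooth_fd[OF sm]], of 0] by simp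
  have ca: "continuous (at x) (\<lambda>y. D2 y p q)" for p q
    using cont S x continuous_on_eq_continuous_at by blast
  show ?thesis
  proof (rule ccontr)
    assume ne: "\<not> ?thesis"
    define A where "A = D2 x u v"
    define B where "B = D2 x v u"
    have AB: "A \<noteq> B" using ne unfolding A_def B_def D2_def .
    define \<epsilon> where "\<epsilon> = norm (A - B) / 20"
    have ep: "\<epsilon> > 0" using AB unfolding \<epsilon>_def by simp
    obtain d1 where d1: "d1 > 0" "\<And>y. dist y x < d1 \<Longrightarrow> dist (D2 y u v) A < \<epsilon>"
      using ca[of u v, unfolded continuous_at_eps_delta] ep unfolding A_def by blast
    obtain d2 where d2: "d2 > 0" "\<And>y. dist y x < d2 \<Longrightarrow> dist (D2 y v u) B < \<epsilon>"
      using ca[of v u, unfolded continuous_at_eps_delta] ep unfolding B_def by blast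
    obtain d0 where d0: "d0 > 0" "ball x d0 \<subseteq> S" using S x open_contains_ball by blast
    define d where "d = min d0 (min d1 d2)"
    have d: "d > 0" "d \<le> d0" "d \<le> d1" "d \<le> d2" using d0 d1 d2 unfolding d_def by auto
    define h where "h = d / (2 * (norm u + norm v + 1))"
    have den: "2 * (norm u + norm v + 1) > 0" by (smt (verit) norm_ge_zero)
    have hpos: "h > 0" unfolding h_def using d den by simp
    have hb: "h * (norm u + norm v) < d"
    proof -
      have "h * (norm u + norm v) \<le> h * (norm u + norm v + 1)" using hpos by simp
      also have "\<dots> = d / 2" unfolding h_def using den by (simp add: field_simps)
      finally show ?thesis using d by simp
    qed
    have near: "dist (x + t *\<^sub>R p + s *\<^sub>R q) x < d"
      if "s \<in> {0..h}" "t \<in> {0..h}" "(p = u \<and> q = v) \<or> (p = v \<and> q = u)" for s t p q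
    proof -
      have "dist (x + t *\<^sub>R p + s *\<^sub>R q) x = norm (t *\<^sub>R p + s *\<^sub>R q)" by (simp add: dist_norm)
      also have "\<dots> \<le> t * norm p + s * norm q"
        using that by (metis abs_of_nonneg atLeastAtMost_iff norm_scaleR norm_triangle_ineq)
      also have "\<dots> \<le> h * norm p + h * norm q"
        using that by (intro add_mono mult_right_mono) auto
      also have "\<dots> = h * (norm u + norm v)" using that(3) by (auto simp: algebra_simps)
      finally show ?thesis using hb by simp
    qed
    have 1: "norm (g (x + h *\<^sub>R u + h *\<^sub>R v) - g (x + h *\<^sub>R u) - g (x + h *\<^sub>R v) + g x - (h*h) *\<^sub>R A)
           \<le> 9 * \<epsilon> * h * h"
    proof (rule delta_bound[where S=S and Dg="\<lambda>y. frechet_derivative g (at y)" and DD="\<lambda>y p. D2 y p v"])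
      show "0 \<le> h" using hpos by simp
      show "x + t *\<^sub>R u + s *\<^sub>R v \<in> S" if "s \<in> {0..h}" "t \<in> {0..h}" for s t
      proof -
        have "dist (x + t *\<^sub>R u + s *\<^sub>R v) x < d" using near[of s t u v] that by blast
        then show ?thesis using d d0 by (auto simp: dist_commute subset_iff)
      qed
      show "norm (D2 (x + t *\<^sub>R u + s *\<^sub>R v) u v - A) \<le> \<epsilon>" if "s \<in> {0..h}" "t \<in> {0..h}" for s t
      proof -
        have "dist (x + t *\<^sub>R u + s *\<^sub>R v) x < d" using near[of s t u v] that by blast
        then show ?thesis using d d1 dist_norm by (smt (verit))
      qed
    qed (use dg dphi in auto)
    have 2: "norm (g (x + h *\<^sub>R v + h *\<^sub>R u) - g (x + h *\<^sub>R v) - g (x + h *\<^sub>R u) + g x - (h*h) *\<^sub>R B)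
           \<le> 9 * \<epsilon> * h * h"
    proof (rule delta_bound[where S=S and Dg="\<lambda>y. frechet_derivative g (at y)" and DD="\<lambda>y p. D2 y p u"])
      show "0 \<le> h" using hpos by simp
      show "x + t *\<^sub>R v + s *\<^sub>R u \<in> S" if "s \<in> {0..h}" "t \<in> {0..h}" for s t
      proof -
        have "dist (x + t *\<^sub>R v + s *\<^sub>R u) x < d" using near[of s t v u] that by blast
        then show ?thesis using d d0 by (auto simp: dist_commute subset_iff)
      qed
      show "norm (D2 (x + t *\<^sub>R v + s *\<^sub>R u) v u - B) \<le> \<epsilon>" if "s \<in> {0..h}" "t \<in> {0..h}" for s t
      proof -
        have "dist (x + t *\<^sub>R v + s *\<^sub>R u) x < d" using near[of s t v u] that by blast
        then show ?thesis using d d2 dist_norm by (smt (verit))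
      qed
    qed (use dg dphi in auto)
    define \<Delta> where "\<Delta> = g (x + h *\<^sub>R u + h *\<^sub>R v) - g (x + h *\<^sub>R u) - g (x + h *\<^sub>R v) + g x"
    have e2: "g (x + h *\<^sub>R v + h *\<^sub>R u) - g (x + h *\<^sub>R v) - g (x + h *\<^sub>R u) + g x = \<Delta>"
      unfolding \<Delta>_def by (simp add: algebra_simps)
    have "(h*h) *\<^sub>R (A - B) = (\<Delta> - (h*h) *\<^sub>R B) - (\<Delta> - (h*h) *\<^sub>R A)"
      by (simp add: algebra_simps)
    then have "norm ((h*h) *\<^sub>R (A - B)) \<le> norm (\<Delta> - (h*h) *\<^sub>R B) + norm (\<Delta> - (h*h) *\<^sub>R A)"
      by (metis norm_triangle_ineq4)
    also have "\<dots> \<le> 18 * \<epsilon> * (h * h)" using 1 2 e2 unfolding \<Delta>_def by simp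
    finally have X: "norm ((h*h) *\<^sub>R (A - B)) \<le> 18 * \<epsilon> * (h * h)" .
    have "norm ((h*h) *\<^sub>R (A - B)) = (h*h) * norm (A - B)"
      by (simp only: norm_scaleR abs_mult abs_of_pos[OF hpos])
    with X have "(h*h) * norm (A - B) \<le> (h*h) * (18 * \<epsilon>)" by (simp add: algebra_simps)
    then have "norm (A - B) \<le> 18 * \<epsilon>" using hpos by simp
    then show False using ep unfolding \<epsilon>_def by simp
  qed
qed

definition Lm :: "complex^2^2 \<Rightarrow> real^3" where
  "Lm X = vector [Re (X$1$2 + X$2$1), Im (X$2$1 - X$1$2), Re (X$1$1 - X$2$2)]"

definition Ml :: "real^3 \<Rightarrow> complex^2^2" where
  "Ml v = (\<chi> i j. if i = 1 then (if j = 1 then of_real (v$3) / 2 else (of_real (v$1) - \<i> * of_real (v$2)) / 2)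
                  else (if j = 1 then (of_real (v$1) + \<i> * of_real (v$2)) / 2 else - of_real (v$3) / 2))"

definition Mm :: "real^3 \<Rightarrow> complex^2^2" where
  "Mm v = cmat_scale (1/2) (mat 1) + Ml v"

lemma Ml_nth: "Ml v $ 1 $ 1 = of_real (v$3) / 2" "Ml v $ 1 $ 2 = (of_real (v$1) - \<i> * of_real (v$2)) / 2"
  "Ml v $ 2 $ 1 = (of_real (v$1) + \<i> * of_real (v$2)) / 2" "Ml v $ 2 $ 2 = - of_real (v$3) / 2"
  by (simp_all add: Ml_def)

lemma Mm_nth: "Mm v $ 1 $ 1 = (1 + of_real (v$3)) / 2" "Mm v $ 1 $ 2 = (of_real (v$1) - \<i> * of_real (v$2)) / 2"
  "Mm v $ 2 $ 1 = (of_real (v$1) + \<i> * of_real (v$2)) / 2" "Mm v $ 2 $ 2 = (1 - of_real (v$3)) / 2"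
  by (simp_all add: Mm_def Ml_nth cmat_scale_def mat_def add_divide_distrib diff_divide_distrib)

lemma Lm_nth: "Lm X $ 1 = Re (X$1$2 + X$2$1)" "Lm X $ 2 = Im (X$2$1 - X$1$2)" "Lm X $ 3 = Re (X$1$1 - X$2$2)"
  by (simp_all add: Lm_def)

lemma mat2_eq: "(A::'a^2^2) = B \<longleftrightarrow> A$1$1 = B$1$1 \<and> A$1$2 = B$1$2 \<and> A$2$1 = B$2$1 \<and> A$2$2 = B$2$2"
  by (auto simp: vec_eq_iff forall_2)

lemma vec3_eq: "(a::real^3) = b \<longleftrightarrow> a$1 = b$1 \<and> a$2 = b$2 \<and> a$3 = b$3"
  by (auto simp: vec_eq_iff forall_3)

lemma inner3: "(a::real^3) \<bullet> b = a$1*b$1 + a$2*b$2 + a$3*b$3"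
  by (simp add: inner_vec_def sum_3)

lemma Mm_Lm:
  assumes "Im (X$1$1) = 0" "Im (X$2$2) = 0" "X$1$1 + X$2$2 = 1" "X$2$1 = cnj (X$1$2)"
  shows "Mm (Lm X) = X"
  using assms unfolding mat2_eq Mm_nth Lm_nth
  by (auto simp: complex_eq_iff)

lemma herm_self: "herm v v = of_real ((cmod (v$1))\<^sup>2 + (cmod (v$2))\<^sup>2)"
  by (simp add: herm_def sum_2 complex_eq_iff cmod_def power2_eq_square)

lemma proj_nth: "proj v $ i $ j = (if i = j then 1 else 0) - v$i * cnj (v$j) / herm v v"
  by (simp add: proj_def cmat_scale_def outer_def mat_def)

lemma vec2_nz: "(v::'a::zero^2) \<noteq> 0 \<longleftrightarrow> v$1 \<noteq> 0 \<or> v$2 \<noteq> 0"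
  by (auto simp: vec_eq_iff forall_2)

lemma proj_herm:
  fixes v :: "complex^2"
  assumes "v \<noteq> 0"
  shows "Im (proj v $1$1) = 0" "Im (proj v $2$2) = 0" "proj v$1$1 + proj v$2$2 = 1"
    "proj v $2$1 = cnj (proj v $1$2)"
proof -
  define r where "r = (cmod (v$1))\<^sup>2 + (cmod (v$2))\<^sup>2"
  have r: "r > 0" using assms unfolding r_def vec2_nz by (auto simp: add_pos_nonneg add_nonneg_pos)
  have h: "herm v v = of_real r" unfolding r_def herm_self ..
  have c: "\<And>z. z * cnj z = of_real ((cmod z)\<^sup>2)" by (metis complex_norm_square of_real_power)
  show "Im (proj v $1$1) = 0" "Im (proj v $2$2) = 0"
    unfolding proj_nth h by (simp_all add: c)
  have "proj v$1$1 + proj v$2$2 = 2 - (v$1 * cnj (v$1) + v$2 * cnj (v$2)) / of_real r"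
    unfolding proj_nth h by (simp add: add_divide_distrib)
  also have "v$1 * cnj (v$1) + v$2 * cnj (v$2) = of_real r" unfolding c r_def by simp
  finally show "proj v$1$1 + proj v$2$2 = 1" using r by simp
  show "proj v $2$1 = cnj (proj v $1$2)" unfolding proj_nth h by simp
qed

lemma proj_Mm: "v \<noteq> 0 \<Longrightarrow> Mm (Lm (proj v)) = proj v"
  using proj_herm Mm_Lm by blast

lemma proj_Lm_norm:
  fixes v :: "complex^2"
  assumes "v \<noteq> 0"
  shows "Lm (proj v) \<bullet> Lm (proj v) = 1"
proof -
  define r where "r = (cmod (v$1))\<^sup>2 + (cmod (v$2))\<^sup>2"
  have r: "r > 0" using assms unfolding r_def vec2_nz by (auto simp: add_pos_nonneg add_nonneg_pos)
  have h: "herm v v = of_real r" unfolding r_def herm_self ..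
  obtain a1 b1 a2 b2 where v1: "v$1 = Complex a1 b1" and v2: "v$2 = Complex a2 b2"
    by (metis complex.exhaust)
  have r2: "r = a1^2 + b1^2 + a2^2 + b2^2" unfolding r_def v1 v2 by (simp add: cmod_def)
  have l1: "Lm (proj v) $ 1 = -2*(a1*a2+b1*b2)/r" unfolding Lm_nth proj_nth h v1 v2 using r
    by (simp add: Re_divide field_simps power2_eq_square)
  have l2: "Lm (proj v) $ 2 = 2*(b1*a2-a1*b2)/r" unfolding Lm_nth proj_nth h v1 v2 using r
    by (simp add: Im_divide field_simps power2_eq_square)
  have l3: "Lm (proj v) $ 3 = (a2^2+b2^2-a1^2-b1^2)/r" unfolding Lm_nth proj_nth h v1 v2 using r
    by (simp add: Re_divide field_simps power2_eq_square)
  have Q: "(-2*(a1*a2+b1*b2))^2 + (2*(b1*a2-a1*b2))^2 + (a2^2+b2^2-a1^2-b1^2)^2 = r^2"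
    unfolding r2 by algebra
  have "Lm (proj v) \<bullet> Lm (proj v) =
     ((-2*(a1*a2+b1*b2))^2 + (2*(b1*a2-a1*b2))^2 + (a2^2+b2^2-a1^2-b1^2)^2) / r^2"
    unfolding inner3 l1 l2 l3 by (simp add: power2_eq_square add_divide_distrib)
  then show ?thesis unfolding Q using r by simp
qed

lemma mmul2: "((A::'a::semiring_1^2^2) ** B) $ i $ j = A$i$1 * B$1$j + A$i$2 * B$2$j"
  by (simp add: matrix_matrix_mult_def sum_2)

lemma comm_Ml: "comm (Ml a) (Ml n) = cmat_scale \<i> (Ml (cross3 a n))"
  unfolding mat2_eq comm_def cmat_scale_def
  by (simp add: mmul2 Ml_nth cross_components complex_eq_iff field_simps)

lemma comm_Mm: "comm A (Mm n) = comm A (Ml n)"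
  unfolding mat2_eq comm_def Mm_def
  by (simp add: mmul2 cmat_scale_def mat_def algebra_simps)

lemma su2_iMl: "su2_inner (cmat_scale \<i> (Ml u)) (cmat_scale \<i> (Ml w)) = (u \<bullet> w) / 4"
  unfolding su2_inner_def sum_2 inner3
  by (simp add: mmul2 cmat_scale_def Ml_nth algebra_simps)

lemma su2_neg_right: "su2_inner A (- B) = - su2_inner A B"
  unfolding su2_inner_def by (simp add: mmul2 sum_2 algebra_simps)

lemma su2_neg_left: "su2_inner (- A) B = - su2_inner A B"
  unfolding su2_inner_def by (simp add: mmul2 sum_2 algebra_simps)

lemma binet_cauchy: "cross3 a n \<bullet> cross3 b n = (a \<bullet> b) * (n \<bullet> n) - (a \<bullet> n) * (b \<bullet> n)"
  unfolding inner3 cross_components by algebra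

lemma XY_herm:
  fixes n e :: "real^3"
  defines "X \<equiv> Mm n ** Ml e ** (mat 1 - Mm n)"
  defines "Y \<equiv> (mat 1 - Mm n) ** Ml e ** Mm n"
  shows "Y $ i $ j = cnj (X $ j $ i)"
proof -
  have "Y $ i $ j = cnj (X $ j $ i)" if "i \<in> {1,2}" "j \<in> {1,2}"
    using that unfolding X_def Y_def
    by (auto simp: mmul2 Mm_nth Ml_nth mat_def complex_eq_iff field_simps)
  then show ?thesis using exhaust_2 by blast
qed

lemma XY_diff:
  fixes n e :: "real^3"
  shows "Mm n ** Ml e ** (mat 1 - Mm n) - (mat 1 - Mm n) ** Ml e ** Mm n = cmat_scale \<i> (Ml (cross3 n e))"
  unfolding mat2_eq cmat_scale_def
  by (simp add: mmul2 Mm_nth Ml_nth mat_def cross_components complex_eq_iff field_simps)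

lemma wave_alg:
  fixes n e :: "real^3"
  assumes "Mm n ** Ml e ** (mat 1 - Mm n) = 0"
  shows "cross3 n e = 0"
proof -
  have Y: "(mat 1 - Mm n) ** Ml e ** Mm n = 0"
    using XY_herm[of n e] assms by (simp add: vec_eq_iff)
  have "cmat_scale \<i> (Ml (cross3 n e)) = 0" using XY_diff[of n e] assms Y by simp
  then have "Lm (cmat_scale (- \<i>) (cmat_scale \<i> (Ml (cross3 n e)))) = Lm (cmat_scale (- \<i>) 0)"
    by simp
  also have "\<dots> = 0" unfolding vec3_eq by (simp add: Lm_nth cmat_scale_def)
  finally have z: "Lm (cmat_scale (- \<i>) (cmat_scale \<i> (Ml (cross3 n e)))) = 0" .
  have "Lm (cmat_scale (- \<i>) (cmat_scale \<i> (Ml w))) = w" for w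
    unfolding vec3_eq by (simp add: Lm_nth cmat_scale_def Ml_nth)
  then show ?thesis using z by simp
qed

lemma dL_bilin:
  fixes prod :: "'b::real_normed_vector \<Rightarrow> 'c::real_normed_vector \<Rightarrow> 'd::real_normed_vector"
    and u :: "real \<times> real \<Rightarrow> 'b" and w :: "real \<times> real \<Rightarrow> 'c"
  assumes bb: "bounded_bilinear prod" and u: "smooth_on S u" and w: "smooth_on S w" and S: "open S" and z: "z \<in> S"
  shows "dL (\<lambda>z. prod (u z) (w z)) z = prod (u z) (dL w z) + prod (dL u z) (w z)"
  using dL_has[OF bounded_bilinear.FDERIV[OF bb smooth_has[OF u S z] smooth_has[OF w S z]]]
    dL_fd[OF u S z] dL_fd[OF w S z] by simp

lemma dR_bilin:
  fixes prod :: "'b::real_normed_vector \<Rightarrow> 'c::real_normed_vector \<Rightarrow> 'd::real_normed_vector"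
    and u :: "real \<times> real \<Rightarrow> 'b" and w :: "real \<times> real \<Rightarrow> 'c"
  assumes bb: "bounded_bilinear prod" and u: "smooth_on S u" and w: "smooth_on S w" and S: "open S" and z: "z \<in> S"
  shows "dR (\<lambda>z. prod (u z) (w z)) z = prod (u z) (dR w z) + prod (dR u z) (w z)"
  using dR_has[OF bounded_bilinear.FDERIV[OF bb smooth_has[OF u S z] smooth_has[OF w S z]]]
    dR_fd[OF u S z] dR_fd[OF w S z] by simp

lemma dL_lin:
  fixes L :: "'b::real_normed_vector \<Rightarrow> 'c::real_normed_vector" and u :: "real \<times> real \<Rightarrow> 'b"
  assumes bl: "bounded_linear L" and u: "smooth_on S u" and S: "open S" and z: "z \<in> S"
  shows "dL (\<lambda>z. L (u z)) z = L (dL u z)"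
  using dL_has[OF bounded_linear.has_derivative[OF bl smooth_has[OF u S z]]] dL_fd[OF u S z] by simp

lemma dR_lin:
  fixes L :: "'b::real_normed_vector \<Rightarrow> 'c::real_normed_vector" and u :: "real \<times> real \<Rightarrow> 'b"
  assumes bl: "bounded_linear L" and u: "smooth_on S u" and S: "open S" and z: "z \<in> S"
  shows "dR (\<lambda>z. L (u z)) z = L (dR u z)"
  using dR_has[OF bounded_linear.has_derivative[OF bl smooth_has[OF u S z]]] dR_fd[OF u S z] by simp

lemma dL_add:
  assumes u: "smooth_on S u" and w: "smooth_on S w" and S: "open S" and z: "z \<in> S"
  shows "dL (\<lambda>z. u z + w z) z = dL u z + dL w z"
  using dL_has[OF has_derivative_add[OF smooth_has[OF u S z] smooth_has[OF w S z]]]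
    dL_fd[OF u S z] dL_fd[OF w S z] by simp

lemma dR_add:
  assumes u: "smooth_on S u" and w: "smooth_on S w" and S: "open S" and z: "z \<in> S"
  shows "dR (\<lambda>z. u z + w z) z = dR u z + dR w z"
  using dR_has[OF has_derivative_add[OF smooth_has[OF u S z] smooth_has[OF w S z]]]
    dR_fd[OF u S z] dR_fd[OF w S z] by simp

lemma dL_const: "dL (\<lambda>z. c) z = 0"
  unfolding dL_def d1_def d2_def by simp

lemma dR_const: "dR (\<lambda>z. c) z = 0"
  unfolding dR_def d1_def d2_def by simp

lemma dL_zero_on:
  assumes "open S" "z \<in> S" "\<And>y. y \<in> S \<Longrightarrow> u y = c"
  shows "dL u z = 0"
  using dL_cong[OF assms(1,2), of u "\<lambda>_. c"] assms(3) dL_const by simp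

lemma dR_zero_on:
  assumes "open S" "z \<in> S" "\<And>y. y \<in> S \<Longrightarrow> u y = c"
  shows "dR u z = 0"
  using dR_cong[OF assms(1,2), of u "\<lambda>_. c"] assms(3) dR_const by simp

lemma dLdR_comm:
  assumes sm: "smooth_on S g" and S: "open S" and z: "z \<in> S"
  shows "dL (dR g) z = dR (dL g) z"
proof -
  have "dL (dR g) z = dL (\<lambda>y. frechet_derivative g (at y) (1/2,-1/2)) z"
    by (rule dL_cong[OF S z]) (simp add: dR_fd[OF sm S])
  also have "\<dots> = frechet_derivative (\<lambda>y. frechet_derivative g (at y) (1/2,-1/2)) (at z) (1/2,1/2)"
    by (rule dL_fd[OF smooth_fd[OF sm] S z])
  also have "\<dots> = frechet_derivative (\<lambda>y. frechet_derivative g (at y) (1/2,1/2)) (at z) (1/2,-1/2)"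
    by (rule fd_sym[OF S z sm])
  also have "\<dots> = dR (\<lambda>y. frechet_derivative g (at y) (1/2,1/2)) z"
    by (rule dR_fd[OF smooth_fd[OF sm] S z, symmetric])
  also have "\<dots> = dR (dL g) z"
    by (rule dR_cong[OF S z]) (simp add: dL_fd[OF sm S])
  finally show ?thesis .
qed

lemma bilinear_mv: "bilinear (\<lambda>(A::complex^2^2) (v::complex^2). A *v v)"
  unfolding bilinear_def
  by (auto intro!: linearI simp: vec_eq_iff matrix_vector_mult_def sum_2 scaleR_conv_of_real[where 'a=complex] algebra_simps)

lemma bb_mv: "bounded_bilinear (\<lambda>(A::complex^2^2) (v::complex^2). A *v v)"
  using bilinear_mv bilinear_conv_bounded_bilinear by blast

lemma bl_Lm: "bounded_linear Lm"
  unfolding linear_conv_bounded_linear[symmetric]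
  by (auto intro!: linearI simp: vec3_eq Lm_nth scaleR_conv_of_real[where 'a=complex] algebra_simps)

lemma bl_Ml: "bounded_linear Ml"
  unfolding linear_conv_bounded_linear[symmetric]
  by (auto intro!: linearI simp: mat2_eq Ml_nth scaleR_conv_of_real[where 'a=complex] algebra_simps add_divide_distrib diff_divide_distrib)

lemma Mm_idem:
  assumes "n \<bullet> n = 1"
  shows "Mm n ** Mm n = Mm n"
proof -
  have h: "n$1*n$1 + n$2*n$2 + n$3*n$3 = 1" using assms by (simp add: inner3)
  show ?thesis unfolding mat2_eq
    by (simp add: mmul2 Mm_nth complex_eq_iff field_simps) (use h in algebra)+
qed

lemma Mm_Ml_Mm:
  assumes "n \<bullet> n = 1" "n \<bullet> b = 0"
  shows "Mm n ** Ml b ** Mm n = 0"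
proof -
  have h: "n$1*n$1 + n$2*n$2 + n$3*n$3 = 1" "n$1*b$1 + n$2*b$2 + n$3*b$3 = 0"
    using assms by (simp_all add: inner3)
  show ?thesis unfolding mat2_eq
    by (simp add: mmul2 Mm_nth Ml_nth complex_eq_iff field_simps) (use h in algebra)+
qed

lemma mv2: "((A::'a::semiring_1^2^2) *v v) $ i = A$i$1 * v$1 + A$i$2 * v$2"
  by (simp add: matrix_vector_mult_def sum_2)

lemma vec2_eq: "(u::'a^2) = w \<longleftrightarrow> u$1 = w$1 \<and> u$2 = w$2"
  by (auto simp: vec_eq_iff forall_2)

lemma herm2: "herm u v = cnj (u$1) * v$1 + cnj (u$2) * v$2"
  by (simp add: herm_def sum_2)

lemma proj_mv: "proj v *v w = w - cvec_scale (herm v w / herm v v) v"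
  unfolding vec2_eq by (simp add: mv2 proj_nth cvec_scale_def herm2 algebra_simps add_divide_distrib)

lemma mv_cvec: "(A::complex^2^2) *v cvec_scale c w = cvec_scale c (A *v w)"
  unfolding vec2_eq by (simp add: mv2 cvec_scale_def algebra_simps)

lemma mv_add: "(A::complex^2^2) *v (u + w) = A *v u + A *v w"
  unfolding vec2_eq by (simp add: mv2 algebra_simps)

lemma mv_diff: "(A::complex^2^2) *v (u - w) = A *v u - A *v w"
  unfolding vec2_eq by (simp add: mv2 algebra_simps)

lemma mv_uminus: "(A::complex^2^2) *v (- u) = - (A *v u)"
  unfolding vec2_eq by (simp add: mv2 algebra_simps)

lemma mv_assoc: "(A::complex^2^2) *v (B *v u) = (A ** B) *v u"
  by (simp add: matrix_vector_mul_assoc)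

lemma mm_outer: "(A::complex^2^2) ** cmat_scale c (outer u w) = cmat_scale c (outer (A *v u) w)"
  unfolding mat2_eq by (simp add: mmul2 mv2 cmat_scale_def outer_def algebra_simps)

lemma mat1_proj: "mat 1 - proj v = cmat_scale (1 / herm v v) (outer v v)"
  by (simp add: proj_def)

lemma cvec_scale_mult: "cvec_scale a (cvec_scale b w) = cvec_scale (a * b) w"
  unfolding vec2_eq by (simp add: cvec_scale_def)

lemma cvec_scale_add: "cvec_scale a (u + w) = cvec_scale a u + cvec_scale a w"
  unfolding vec2_eq by (simp add: cvec_scale_def algebra_simps)

lemma outer_zero: "outer 0 w = 0"
  unfolding mat2_eq by (simp add: outer_def)

lemma cmat_scale_zero: "cmat_scale c 0 = 0"
  unfolding mat2_eq by (simp add: cmat_scale_def)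

locale sig =
  fixes Om :: "(real \<times> real) set" and f :: "real \<times> real \<Rightarrow> complex^2"
  assumes S: "open Om" and nz: "\<And>x. x \<in> Om \<Longrightarrow> f x \<noteq> 0" and smf: "smooth_on Om f"
    and EL: "\<And>x. x \<in> Om \<Longrightarrow> CP1_EL f x"
begin

definition hs where "hs z = herm (f z) (f z)"

lemma hs_nz: "z \<in> Om \<Longrightarrow> hs z \<noteq> 0"
proof -
  assume z: "z \<in> Om"
  have "(cmod (f z $ 1))\<^sup>2 + (cmod (f z $ 2))\<^sup>2 > 0"
    using nz[OF z] unfolding vec2_nz by (auto simp: add_pos_nonneg add_nonneg_pos)
  then show ?thesis unfolding hs_def herm_self by (metis less_irrefl of_real_eq_0_iff)
qed

lemma smooth_hs: "smooth_on Om hs"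
proof -
  have "hs = (\<lambda>z. cnj (f z $ 1) * f z $ 1 + cnj (f z $ 2) * f z $ 2)"
    by (simp add: fun_eq_iff hs_def herm2)
  then show ?thesis
    by (simp only:) (intro smooth_add smooth_mult smooth_cnj smooth_nth smf S)
qed

lemma P_eq: "Pf f = (\<lambda>z. \<chi> i j. (if i = j then 1 else 0) - f z $ i * cnj (f z $ j) / hs z)"
  by (simp add: fun_eq_iff vec_eq_iff Pf_def proj_nth hs_def)

lemma smooth_P: "smooth_on Om (Pf f)"
  unfolding P_eq
  by (intro smooth_vec smooth_diff smooth_divide smooth_mult smooth_cnj smooth_nth smooth_const smf
        smooth_hs S hs_nz)

definition nn where "nn z = Lm (Pf f z)"

lemma smooth_nn: "smooth_on Om nn"
  unfolding nn_def by (rule smooth_linear[OF bl_Lm S smooth_P])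

lemma P_Mm: "z \<in> Om \<Longrightarrow> Pf f z = Mm (nn z)"
  unfolding nn_def Pf_def using proj_Mm nz by metis

lemma nn_norm: "z \<in> Om \<Longrightarrow> nn z \<bullet> nn z = 1"
  unfolding nn_def Pf_def using proj_Lm_norm nz by metis

lemma Mm_affine: "Mm v = cmat_scale (1/2) (mat 1) + Ml v"
  by (simp add: Mm_def)

lemma dL_P: assumes z: "z \<in> Om" shows "dL (Pf f) z = Ml (dL nn z)"
proof -
  have "dL (Pf f) z = dL (\<lambda>y. cmat_scale (1/2) (mat 1) + Ml (nn y)) z"
    by (rule dL_cong[OF S z]) (simp add: P_Mm Mm_affine)
  also have "\<dots> = dL (\<lambda>y. cmat_scale (1/2) (mat 1)) z + dL (\<lambda>y. Ml (nn y)) z"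
    by (rule dL_add[OF smooth_const smooth_linear[OF bl_Ml S smooth_nn] S z])
  also have "\<dots> = Ml (dL nn z)" by (simp add: dL_const dL_lin[OF bl_Ml smooth_nn S z])
  finally show ?thesis .
qed

lemma dR_P: assumes z: "z \<in> Om" shows "dR (Pf f) z = Ml (dR nn z)"
proof -
  have "dR (Pf f) z = dR (\<lambda>y. cmat_scale (1/2) (mat 1) + Ml (nn y)) z"
    by (rule dR_cong[OF S z]) (simp add: P_Mm Mm_affine)
  also have "\<dots> = dR (\<lambda>y. cmat_scale (1/2) (mat 1)) z + dR (\<lambda>y. Ml (nn y)) z"
    by (rule dR_add[OF smooth_const smooth_linear[OF bl_Ml S smooth_nn] S z])
  also have "\<dots> = Ml (dR nn z)" by (simp add: dR_const dR_lin[OF bl_Ml smooth_nn S z])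
  finally show ?thesis .
qed

lemma dLdR_P: assumes z: "z \<in> Om" shows "dL (dR (Pf f)) z = Ml (dL (dR nn) z)"
proof -
  have "dL (dR (Pf f)) z = dL (\<lambda>y. Ml (dR nn y)) z"
    by (rule dL_cong[OF S z]) (simp add: dR_P)
  also have "\<dots> = Ml (dL (dR nn) z)" by (rule dL_lin[OF bl_Ml smooth_dR[OF smooth_nn S] S z])
  finally show ?thesis .
qed

lemmas sm = smooth_nn smooth_dL[OF smooth_nn S] smooth_dR[OF smooth_nn S]
  smooth_dL[OF smooth_dL[OF smooth_nn S] S] smooth_dR[OF smooth_dR[OF smooth_nn S] S]
  smooth_dL[OF smooth_dR[OF smooth_nn S] S] smooth_dR[OF smooth_dL[OF smooth_nn S] S]

lemma na: assumes z: "z \<in> Om" shows "nn z \<bullet> dL nn z = 0"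
proof -
  have "dL (\<lambda>y. nn y \<bullet> nn y) z = 0" by (rule dL_zero_on[OF S z nn_norm])
  moreover have "dL (\<lambda>y. nn y \<bullet> nn y) z = nn z \<bullet> dL nn z + dL nn z \<bullet> nn z"
    by (rule dL_bilin[OF bounded_bilinear_inner smooth_nn smooth_nn S z])
  ultimately show ?thesis by (simp add: inner_commute)
qed

lemma nb: assumes z: "z \<in> Om" shows "nn z \<bullet> dR nn z = 0"
proof -
  have "dR (\<lambda>y. nn y \<bullet> nn y) z = 0" by (rule dR_zero_on[OF S z nn_norm])
  moreover have "dR (\<lambda>y. nn y \<bullet> nn y) z = nn z \<bullet> dR nn z + dR nn z \<bullet> nn z"
    by (rule dR_bilin[OF bounded_bilinear_inner smooth_nn smooth_nn S z])
  ultimately show ?thesis by (simp add: inner_commute)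
qed

lemma nc: assumes z: "z \<in> Om" shows "nn z \<bullet> dL (dL nn) z = - (dL nn z \<bullet> dL nn z)"
proof -
  have "dL (\<lambda>y. nn y \<bullet> dL nn y) z = 0" by (rule dL_zero_on[OF S z na])
  moreover have "dL (\<lambda>y. nn y \<bullet> dL nn y) z = nn z \<bullet> dL (dL nn) z + dL nn z \<bullet> dL nn z"
    by (rule dL_bilin[OF bounded_bilinear_inner smooth_nn sm(2) S z])
  ultimately show ?thesis by simp
qed

lemma nd: assumes z: "z \<in> Om" shows "nn z \<bullet> dR (dR nn) z = - (dR nn z \<bullet> dR nn z)"
proof -
  have "dR (\<lambda>y. nn y \<bullet> dR nn y) z = 0" by (rule dR_zero_on[OF S z nb])
  moreover have "dR (\<lambda>y. nn y \<bullet> dR nn y) z = nn z \<bullet> dR (dR nn) z + dR nn z \<bullet> dR nn z"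
    by (rule dR_bilin[OF bounded_bilinear_inner smooth_nn sm(3) S z])
  ultimately show ?thesis by simp
qed

lemma ne: assumes z: "z \<in> Om" shows "nn z \<bullet> dL (dR nn) z = - (dL nn z \<bullet> dR nn z)"
proof -
  have "dL (\<lambda>y. nn y \<bullet> dR nn y) z = 0" by (rule dL_zero_on[OF S z nb])
  moreover have "dL (\<lambda>y. nn y \<bullet> dR nn y) z = nn z \<bullet> dL (dR nn) z + dL nn z \<bullet> dR nn z"
    by (rule dL_bilin[OF bounded_bilinear_inner smooth_nn sm(3) S z])
  ultimately show ?thesis by simp
qed

lemma Pf_mv_f: "y \<in> Om \<Longrightarrow> Pf f y *v f y = 0"
  using hs_nz[of y] unfolding Pf_def hs_def proj_mv by (simp add: vec2_eq cvec_scale_def)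

lemma first_R: assumes y: "y \<in> Om" shows "Pf f y *v dR f y + dR (Pf f) y *v f y = 0"
proof -
  have "dR (\<lambda>y. Pf f y *v f y) y = 0" by (rule dR_zero_on[OF S y Pf_mv_f])
  then show ?thesis using dR_bilin[OF bb_mv smooth_P smf S y] by simp
qed

lemma first_L: assumes y: "y \<in> Om" shows "Pf f y *v dL f y + dL (Pf f) y *v f y = 0"
proof -
  have "dL (\<lambda>y. Pf f y *v f y) y = 0" by (rule dL_zero_on[OF S y Pf_mv_f])
  then show ?thesis using dL_bilin[OF bb_mv smooth_P smf S y] by simp
qed

lemma second: assumes z: "z \<in> Om"
  shows "(Pf f z *v dL (dR f) z + dL (Pf f) z *v dR f z) + (dR (Pf f) z *v dL f z + dL (dR (Pf f)) z *v f z) = 0"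
proof -
  have smP: "smooth_on Om (Pf f)" "smooth_on Om (dR (Pf f))" "smooth_on Om f" "smooth_on Om (dR f)"
    using smooth_P smooth_dR S smf by auto
  have s1: "smooth_on Om (\<lambda>y. Pf f y *v dR f y)"
    using smooth_bilinear[OF bb_mv S smP(1) smP(4)] by simp
  have s2: "smooth_on Om (\<lambda>y. dR (Pf f) y *v f y)"
    using smooth_bilinear[OF bb_mv S smP(2) smP(3)] by simp
  have "dL (\<lambda>y. Pf f y *v dR f y + dR (Pf f) y *v f y) z = 0"
    by (rule dL_zero_on[OF S z first_R])
  moreover have "dL (\<lambda>y. Pf f y *v dR f y + dR (Pf f) y *v f y) z
     = dL (\<lambda>y. Pf f y *v dR f y) z + dL (\<lambda>y. dR (Pf f) y *v f y) z"
    by (rule dL_add[OF s1 s2 S z])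
  moreover have "dL (\<lambda>y. Pf f y *v dR f y) z = Pf f z *v dL (dR f) z + dL (Pf f) z *v dR f z"
    using dL_bilin[OF bb_mv smP(1) smP(4) S z] by simp
  moreover have "dL (\<lambda>y. dR (Pf f) y *v f y) z = dR (Pf f) z *v dL f z + dL (dR (Pf f)) z *v f z"
    using dL_bilin[OF bb_mv smP(2) smP(3) S z] by simp
  ultimately show ?thesis by simp
qed

lemma cvec_scale_uminus: "cvec_scale c (- w) = - cvec_scale c w"
  unfolding vec2_eq by (simp add: cvec_scale_def)

lemma mat0_mv: "(0::complex^2^2) *v w = 0"
  unfolding vec2_eq by (simp add: mv2)

lemma wave: assumes z: "z \<in> Om" shows "dL (dR nn) z = - (dL nn z \<bullet> dR nn z) *\<^sub>R nn z"
proof -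
  define P where "P = Pf f z"
  define PL where "PL = dL (Pf f) z"
  define PR where "PR = dR (Pf f) z"
  define PLR where "PLR = dL (dR (Pf f)) z"
  define v where "v = f z"
  define vL where "vL = dL f z"
  define vR where "vR = dR f z"
  define vLR where "vLR = dL (dR f) z"
  define s where "s = hs z"
  define \<alpha> where "\<alpha> = herm v vR / s"
  define \<beta> where "\<beta> = herm v vL / s"
  have PP: "P ** P = P" unfolding P_def P_Mm[OF z] using Mm_idem nn_norm[OF z] by blast
  have PRP: "P ** (PR ** P) = 0" unfolding P_def PR_def P_Mm[OF z] dR_P[OF z]
    using Mm_Ml_Mm[OF nn_norm[OF z] nb[OF z]] by (simp add: matrix_mul_assoc)
  have PLP: "P ** (PL ** P) = 0" unfolding P_def PL_def P_Mm[OF z] dL_P[OF z]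
    using Mm_Ml_Mm[OF nn_norm[OF z] na[OF z]] by (simp add: matrix_mul_assoc)
  have Pw: "P *v w = w - cvec_scale (herm v w / s) v" for w
    unfolding P_def Pf_def v_def s_def hs_def by (rule proj_mv)
  have fR: "PR *v v = - (P *v vR)" using first_R[OF z] unfolding P_def PR_def v_def vR_def
    by (simp add: eq_neg_iff_add_eq_0 add.commute)
  have fL: "PL *v v = - (P *v vL)" using first_L[OF z] unfolding P_def PL_def v_def vL_def
    by (simp add: eq_neg_iff_add_eq_0 add.commute)
  have sec: "PLR *v v = - (P *v vLR + PL *v vR + PR *v vL)"
    using second[OF z] unfolding P_def PL_def PR_def PLR_def v_def vL_def vR_def vLR_def
    by (simp add: eq_neg_iff_add_eq_0 algebra_simps)
  have decL: "vL = cvec_scale \<beta> v + P *v vL" unfolding Pw \<beta>_def by simp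
  have decR: "vR = cvec_scale \<alpha> v + P *v vR" unfolding Pw \<alpha>_def by simp
  have A: "P *v (PR *v vL) = - cvec_scale \<beta> (P *v vR)"
  proof -
    have "P *v (PR *v vL) = P *v (PR *v (cvec_scale \<beta> v + P *v vL))" using decL by simp
    also have "\<dots> = cvec_scale \<beta> (P *v (PR *v v)) + (P ** (PR ** P)) *v vL"
      by (simp add: mv_add mv_cvec mv_assoc)
    also have "\<dots> = - cvec_scale \<beta> (P *v vR)"
      by (simp add: fR PRP mat0_mv mv_uminus mv_assoc PP cvec_scale_uminus)
    finally show ?thesis .
  qed
  have B: "P *v (PL *v vR) = - cvec_scale \<alpha> (P *v vL)"
  proof -
    have "P *v (PL *v vR) = P *v (PL *v (cvec_scale \<alpha> v + P *v vR))" using decR by simp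
    also have "\<dots> = cvec_scale \<alpha> (P *v (PL *v v)) + (P ** (PL ** P)) *v vR"
      by (simp add: mv_add mv_cvec mv_assoc)
    also have "\<dots> = - cvec_scale \<alpha> (P *v vL)"
      by (simp add: fL PLP mat0_mv mv_uminus mv_assoc PP cvec_scale_uminus)
    finally show ?thesis .
  qed
  have el: "P *v (vLR - cvec_scale (1 / s) (cvec_scale (herm v vR) vL + cvec_scale (herm v vL) vR)) = 0"
    using EL[OF z] unfolding CP1_EL_def P_def Pf_def v_def vL_def vR_def vLR_def s_def hs_def .
  have "cvec_scale (1 / s) (cvec_scale (herm v vR) vL + cvec_scale (herm v vL) vR)
      = cvec_scale \<alpha> vL + cvec_scale \<beta> vR"
    unfolding \<alpha>_def \<beta>_def by (simp add: cvec_scale_add cvec_scale_mult)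
  then have el2: "P *v vLR = cvec_scale \<alpha> (P *v vL) + cvec_scale \<beta> (P *v vR)"
    using el by (simp add: mv_diff mv_add mv_cvec)
  have key: "P *v (PLR *v v) = 0"
  proof -
    have "P *v (PLR *v v) = - (P *v (P *v vLR) + P *v (PL *v vR) + P *v (PR *v vL))"
      unfolding sec by (simp only: mv_uminus mv_add)
    also have "\<dots> = - (P *v vLR + P *v (PL *v vR) + P *v (PR *v vL))" by (simp only: mv_assoc PP)
    also have "\<dots> = 0" unfolding A B el2 by (simp add: algebra_simps)
    finally show ?thesis .
  qed
  have X: "P ** PLR ** (mat 1 - P) = 0"
  proof -
    have "mat 1 - P = cmat_scale (1 / s) (outer v v)"
      unfolding P_def Pf_def v_def s_def hs_def by (rule mat1_proj)
    then show ?thesis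
      by (simp add: mm_outer mv_assoc[symmetric] key outer_zero cmat_scale_zero)
  qed
  have cr: "cross3 (nn z) (dL (dR nn) z) = 0"
    by (rule wave_alg) (use X in \<open>simp add: P_def PLR_def P_Mm[OF z] dLdR_P[OF z]\<close>)
  have "cross3 (nn z) (cross3 (nn z) (dL (dR nn) z))
     = (nn z \<bullet> dL (dR nn) z) *\<^sub>R nn z - (nn z \<bullet> nn z) *\<^sub>R dL (dR nn) z"
    by (rule Lagrange)
  then have "dL (dR nn) z = (nn z \<bullet> dL (dR nn) z) *\<^sub>R nn z"
    using cr nn_norm[OF z] by simp
  then show ?thesis using ne[OF z] by simp
qed

end

context sig begin

lemma dLX_eq: "z \<in> Om \<Longrightarrow> dLX f z = cmat_scale \<i> (Ml (cross3 (dL nn z) (nn z)))"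
  unfolding dLX_def by (simp add: dL_P P_Mm comm_Mm comm_Ml)

lemma dRX_eq: "z \<in> Om \<Longrightarrow> dRX f z = - cmat_scale \<i> (Ml (cross3 (dR nn z) (nn z)))"
  unfolding dRX_def by (simp add: dR_P P_Mm comm_Mm comm_Ml)

lemma GLL: "z \<in> Om \<Longrightarrow> G_LL f z = (dL nn z \<bullet> dL nn z) / 4"
  unfolding G_LL_def by (simp add: dLX_eq su2_iMl binet_cauchy nn_norm na inner_commute)

lemma GRR: "z \<in> Om \<Longrightarrow> G_RR f z = (dR nn z \<bullet> dR nn z) / 4"
  unfolding G_RR_def by (simp add: dRX_eq su2_neg_left su2_neg_right su2_iMl binet_cauchy nn_norm nb inner_commute)

lemma GLR: "z \<in> Om \<Longrightarrow> G_LR f z = - (dL nn z \<bullet> dR nn z) / 4"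
  unfolding G_LR_def by (simp add: dLX_eq dRX_eq su2_neg_right su2_iMl binet_cauchy nn_norm na nb inner_commute)

lemma detG_eq: "z \<in> Om \<Longrightarrow> detG f z =
   ((dL nn z \<bullet> dL nn z) * (dR nn z \<bullet> dR nn z) - (dL nn z \<bullet> dR nn z)\<^sup>2) / 16"
  unfolding detG_def by (simp add: GLL GRR GLR power2_eq_square field_simps)

lemma dRdL_nn: "z \<in> Om \<Longrightarrow> dR (dL nn) z = - (dL nn z \<bullet> dR nn z) *\<^sub>R nn z"
  using dLdR_comm[OF smooth_nn S] wave by metis

lemma dLsC: assumes z: "z \<in> Om"
  shows "dL (\<lambda>y. dL nn y \<bullet> dR nn y) z = dL (dL nn) z \<bullet> dR nn z"
  using dL_bilin[OF bounded_bilinear_inner sm(2) sm(3) S z] wave[OF z] na[OF z]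
  by (simp add: inner_commute)

lemma dRdLdL_nn: assumes z: "z \<in> Om"
  shows "dR (dL (dL nn)) z = - (dL (dL nn) z \<bullet> dR nn z) *\<^sub>R nn z - (dL nn z \<bullet> dR nn z) *\<^sub>R dL nn z"
proof -
  have "dR (dL (dL nn)) z = dL (dR (dL nn)) z"
    using dLdR_comm[OF sm(2) S z] by simp
  also have "\<dots> = dL (\<lambda>y. (- (dL nn y \<bullet> dR nn y)) *\<^sub>R nn y) z"
    by (rule dL_cong[OF S z]) (simp add: dRdL_nn)
  also have "\<dots> = (- (dL nn z \<bullet> dR nn z)) *\<^sub>R dL nn z + dL (\<lambda>y. - (dL nn y \<bullet> dR nn y)) z *\<^sub>R nn z"
    by (rule dL_bilin[OF bounded_bilinear_scaleR smooth_minus[OF S smooth_inner[OF S sm(2) sm(3)]] smooth_nn S z])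
  also have "dL (\<lambda>y. - (dL nn y \<bullet> dR nn y)) z = - (dL (dL nn) z \<bullet> dR nn z)"
    using dL_lin[OF bounded_linear_minus[OF bounded_linear_ident] smooth_inner[OF S sm(2) sm(3)] S z] dLsC[OF z]
    by simp
  finally have "dR (dL (dL nn)) z = (- (dL nn z \<bullet> dR nn z)) *\<^sub>R dL nn z + (- (dL (dL nn) z \<bullet> dR nn z)) *\<^sub>R nn z" .
  then show ?thesis by (simp only: scaleR_minus_left diff_conv_add_uminus add.commute)
qed

end

locale sig2 = sig + assumes detnz: "\<And>x. x \<in> Om \<Longrightarrow> detG f x \<noteq> 0"
begin

lemma det_pos: "z \<in> Om \<Longrightarrow> detG f z > 0"
  using detG_eq[of z] detnz[of z] Cauchy_Schwarz_ineq[of "dL nn z" "dR nn z"] by force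

lemma A_pos: assumes z: "z \<in> Om" shows "dL nn z \<bullet> dL nn z > 0"
proof (rule ccontr)
  assume "\<not> ?thesis"
  then have "dL nn z \<bullet> dL nn z = 0" using inner_ge_zero[of "dL nn z"] by linarith
  then show False using det_pos[OF z] detG_eq[OF z] by simp
qed

end

lemma gram_id:
  fixes a b u v :: "real^3"
  shows "(cross3 a b \<bullet> cross3 a b) * (u \<bullet> v) = (u \<bullet> cross3 a b) * (v \<bullet> cross3 a b)
    + ((u \<bullet> a) * (b \<bullet> b) - (u \<bullet> b) * (a \<bullet> b)) * (v \<bullet> a)
    + ((u \<bullet> b) * (a \<bullet> a) - (u \<bullet> a) * (a \<bullet> b)) * (v \<bullet> b)"
  unfolding inner3 cross_components by algebra

lemma perp_cross:
  fixes n a b u :: "real^3"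
  assumes "n \<bullet> n = 1" "n \<bullet> a = 0" "n \<bullet> b = 0" "n \<bullet> u = 0"
  shows "u \<bullet> cross3 a b = 0"
proof -
  define w where "w = cross3 a b"
  have "cross3 n w = (n \<bullet> b) *\<^sub>R a - (n \<bullet> a) *\<^sub>R b" unfolding w_def by (rule Lagrange)
  then have nw: "cross3 n w = 0" using assms by simp
  have "cross3 n (cross3 n w) = (n \<bullet> w) *\<^sub>R n - (n \<bullet> n) *\<^sub>R w" by (rule Lagrange)
  then have "w = (n \<bullet> w) *\<^sub>R n" using nw assms(1) by simp
  then have "u \<bullet> w = (n \<bullet> w) * (u \<bullet> n)" by (metis inner_scaleR_right)
  then show ?thesis using assms(4) unfolding w_def by (simp add: inner_commute)
qed

lemma key_geom:
  fixes n a b c d :: "real^3"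
  assumes nn: "n \<bullet> n = 1" and na: "n \<bullet> a = 0" and nb: "n \<bullet> b = 0"
    and nc: "n \<bullet> c = - (a \<bullet> a)" and nd: "n \<bullet> d = - (b \<bullet> b)"
  shows "((a \<bullet> a) * (b \<bullet> b) - (a \<bullet> b)\<^sup>2) * ((c \<bullet> d) - (a \<bullet> a) * (b \<bullet> b))
    = ((a \<bullet> c) * (b \<bullet> b) - (c \<bullet> b) * (a \<bullet> b)) * (a \<bullet> d)
    + ((c \<bullet> b) * (a \<bullet> a) - (a \<bullet> c) * (a \<bullet> b)) * (b \<bullet> d)"
proof -
  define u where "u = c + (a \<bullet> a) *\<^sub>R n"
  define v where "v = d + (b \<bullet> b) *\<^sub>R n"
  have nu: "n \<bullet> u = 0" unfolding u_def using nc nn by (simp add: inner_add_right)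
  have nv: "n \<bullet> v = 0" unfolding v_def using nd nn by (simp add: inner_add_right)
  have cu: "c = u - (a \<bullet> a) *\<^sub>R n" and dv: "d = v - (b \<bullet> b) *\<^sub>R n" unfolding u_def v_def by simp_all
  have cd: "c \<bullet> d = u \<bullet> v + (a \<bullet> a) * (b \<bullet> b)"
    unfolding cu dv using nu nv nn by (simp add: inner_diff_left inner_diff_right inner_commute)
  have ac: "a \<bullet> c = u \<bullet> a" unfolding cu using na by (simp add: inner_diff_right inner_commute)
  have cb: "c \<bullet> b = u \<bullet> b" unfolding cu using nb by (simp add: inner_diff_left inner_diff_right inner_commute)
  have ad: "a \<bullet> d = v \<bullet> a" unfolding dv using na by (simp add: inner_diff_right inner_commute)
  have bd: "b \<bullet> d = v \<bullet> b" unfolding dv using nb by (simp add: inner_diff_right inner_commute)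
  have g: "cross3 a b \<bullet> cross3 a b = (a \<bullet> a) * (b \<bullet> b) - (a \<bullet> b)\<^sup>2"
    using binet_cauchy[of a b a] by (simp add: power2_eq_square inner_commute)
  have z1: "u \<bullet> cross3 a b = 0" by (rule perp_cross[OF nn na nb nu])
  have z2: "v \<bullet> cross3 a b = 0" by (rule perp_cross[OF nn na nb nv])
  show ?thesis using gram_id[of a b u v] unfolding cd ac cb ad bd g z1 z2
    by (simp add: algebra_simps)
qed

lemma final_alg:
  fixes A B C P Q b1 b2 g r :: real
  assumes A: "A > 0" and q: "A * B - C^2 > 0" and r: "r = sqrt ((A * B - C^2) / 16)"
    and key: "(A * B - C^2) * (g - A * B) = (P * B - Q * C) * b1 + (Q * A - P * C) * b2"
  defines "N \<equiv> - Q / 4 + C * P / (4 * A)"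
  defines "N' \<equiv> - (g - C^2) / 4 + ((b1 * P + C * 0) * (4 * A) - C * P * (4 * 0)) / (4 * A)^2"
  defines "q' \<equiv> (0 * B + A * (2 * b2) - 2 * C * b1) / 16"
  shows "1 / r * ((N' * r - N * (q' / (2 * r))) / r^2) = -4"
proof -
  define Qd where "Qd = A * B - C^2"
  have Qd: "Qd > 0" using q unfolding Qd_def .
  have r0: "r > 0" using r Qd unfolding Qd_def by simp
  have r2: "r^2 = Qd / 16" using r Qd unfolding Qd_def by simp
  have g: "g = A * B + ((P * B - Q * C) * b1 + (Q * A - P * C) * b2) / Qd"
    using key Qd unfolding Qd_def by (simp add: field_simps)
  have "1 / r * ((N' * r - N * (q' / (2 * r))) / r^2) = (N' * r^2 - N * q' / 2) / (r^2)^2"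
    using r0 by (simp add: field_simps power2_eq_square)
  also have "\<dots> = -4"
    unfolding r2 N'_def N_def q'_def g using A Qd
    apply (simp add: field_simps power2_eq_square)
    apply (unfold Qd_def)
    apply algebra
    done
  finally show ?thesis .
qed

lemma Hf_deriv:
  fixes A B C P Q :: "real \<times> real \<Rightarrow> real"
  assumes dA: "(A has_derivative A') (at x)" and dB: "(B has_derivative B') (at x)"
    and dC: "(C has_derivative C') (at x)" and dP: "(P has_derivative P') (at x)"
    and dQ: "(Q has_derivative Q') (at x)"
    and Ap: "A x > 0" and qp: "A x * B x - (C x)^2 > 0"
  shows "((\<lambda>y. (- Q y / 4 + C y * P y / (4 * A y)) / sqrt ((A y * B y - (C y)^2) / 16)) has_derivative
     (\<lambda>w. ((- Q' w / 4 + ((C' w * P x + C x * P' w) * (4 * A x) - C x * P x * (4 * A' w)) / (4 * A x)^2)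
             * sqrt ((A x * B x - (C x)^2) / 16)
           - (- Q x / 4 + C x * P x / (4 * A x))
             * (((A' w * B x + A x * B' w - 2 * C x * C' w) / 16) / (2 * sqrt ((A x * B x - (C x)^2) / 16))))
          / (sqrt ((A x * B x - (C x)^2) / 16))^2)) (at x)"
proof -
  define q where "q = (A x * B x - (C x)^2) / 16"
  have q: "q > 0" using qp unfolding q_def by simp
  have sq: "sqrt q > 0" using q by simp
  have nzA: "A x \<noteq> 0" and nzq: "A x * B x \<noteq> (C x)\<^sup>2" and lt: "(C x)\<^sup>2 < A x * B x"
    using Ap qp by auto
  show ?thesis
    apply (rule has_derivative_eq_rhs)
     apply (auto intro!: derivative_eq_intros dA dB dC dP dQ simp: nzA nzq lt)[1]
    apply (rule ext)
    using Ap sq q unfolding q_def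
    apply (simp add: field_simps power2_eq_square)
    done
qed


context sig2 begin

definition "sA y = dL nn y \<bullet> dL nn y"
definition "sB y = dR nn y \<bullet> dR nn y"
definition "sC y = dL nn y \<bullet> dR nn y"
definition "s1 y = dL nn y \<bullet> dL (dL nn) y"
definition "s2 y = dL (dL nn) y \<bullet> dR nn y"

lemma sm_s: "smooth_on Om sA" "smooth_on Om sB" "smooth_on Om sC" "smooth_on Om s1" "smooth_on Om s2"
  unfolding sA_def[abs_def] sB_def[abs_def] sC_def[abs_def] s1_def[abs_def] s2_def[abs_def]
  by (intro smooth_inner S sm)+

lemma dR_sA: assumes x: "x \<in> Om" shows "dR sA x = 0"
  unfolding sA_def[abs_def] using dR_bilin[OF bounded_bilinear_inner sm(2) sm(2) S x] dRdL_nn[OF x] na[OF x]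
  by (simp add: inner_commute)

lemma dR_sB: assumes x: "x \<in> Om" shows "dR sB x = 2 * (dR nn x \<bullet> dR (dR nn) x)"
  unfolding sB_def[abs_def] using dR_bilin[OF bounded_bilinear_inner sm(3) sm(3) S x]
  by (simp add: inner_commute)

lemma dR_sC: assumes x: "x \<in> Om" shows "dR sC x = dL nn x \<bullet> dR (dR nn) x"
  unfolding sC_def[abs_def] using dR_bilin[OF bounded_bilinear_inner sm(2) sm(3) S x] dRdL_nn[OF x] nb[OF x]
  by (simp add: inner_commute)

lemma dR_s1: assumes x: "x \<in> Om" shows "dR s1 x = 0"
  unfolding s1_def[abs_def] using dR_bilin[OF bounded_bilinear_inner sm(2) sm(4) S x] dRdL_nn[OF x]
    dRdLdL_nn[OF x] na[OF x] nc[OF x]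
  by (simp add: inner_commute inner_diff_right inner_diff_left algebra_simps)

lemma dR_s2: assumes x: "x \<in> Om"
  shows "dR s2 x = dL (dL nn) x \<bullet> dR (dR nn) x - (sC x)\<^sup>2"
  unfolding s2_def[abs_def] sC_def using dR_bilin[OF bounded_bilinear_inner sm(4) sm(3) S x]
    dRdLdL_nn[OF x] nb[OF x]
  by (simp add: inner_commute inner_diff_right inner_diff_left algebra_simps power2_eq_square)

lemma bl_q: "bounded_linear (\<lambda>t::real. - t / 4)"
  unfolding linear_conv_bounded_linear[symmetric] by (auto intro!: linearI simp: algebra_simps)

lemma dL_GLR: assumes y: "y \<in> Om" shows "dL (G_LR f) y = - s2 y / 4"
proof -
  have "dL (G_LR f) y = dL (\<lambda>z. - sC z / 4) y"
    by (rule dL_cong[OF S y]) (simp add: GLR sC_def)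
  also have "\<dots> = - dL sC y / 4" by (rule dL_lin[OF bl_q sm_s(3) S y])
  also have "dL sC y = s2 y" using dLsC[OF y] unfolding sC_def[abs_def] s2_def .
  finally show ?thesis .
qed

lemma dL_lnGLL: assumes y: "y \<in> Om" shows "dL (\<lambda>z. ln (G_LL f z)) y = 2 * s1 y / sA y"
proof -
  have Ap: "sA y > 0" unfolding sA_def using A_pos[OF y] .
  have "dL (\<lambda>z. ln (G_LL f z)) y = dL (\<lambda>z. ln (sA z / 4)) y"
    by (rule dL_cong[OF S y]) (simp add: GLL sA_def)
  also have "\<dots> = frechet_derivative sA (at y) (1/2,1/2) / sA y"
  proof -
    have "((\<lambda>z. ln (sA z / 4)) has_derivative (\<lambda>h. frechet_derivative sA (at y) h / sA y)) (at y)"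
      apply (rule has_derivative_eq_rhs)
       apply (auto intro!: derivative_eq_intros smooth_has[OF sm_s(1) S y] simp: Ap)[1]
      using Ap by (simp add: fun_eq_iff field_simps)
    then show ?thesis by (rule dL_has)
  qed
  also have "frechet_derivative sA (at y) (1/2,1/2) = dL sA y" by (rule dL_fd[OF sm_s(1) S y, symmetric])
  also have "dL sA y = 2 * s1 y"
    unfolding sA_def[abs_def] s1_def using dL_bilin[OF bounded_bilinear_inner sm(2) sm(2) S y]
    by (simp add: inner_commute)
  finally show ?thesis .
qed

definition "Hf y = (- s2 y / 4 + sC y * s1 y / (4 * sA y)) / sqrt ((sA y * sB y - (sC y)^2) / 16)"

lemma h_eq: assumes y: "y \<in> Om"
  shows "(dL (G_LR f) y - 1/2 * G_LR f y * dL (\<lambda>z. ln (G_LL f z)) y) / sqrt (detG f y) = Hf y"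
proof -
  have Ap: "sA y > 0" unfolding sA_def using A_pos[OF y] .
  have d: "detG f y = (sA y * sB y - (sC y)^2) / 16" unfolding sA_def sB_def sC_def by (rule detG_eq[OF y])
  have g: "G_LR f y = - sC y / 4" unfolding sC_def by (rule GLR[OF y])
  show ?thesis unfolding Hf_def dL_GLR[OF y] dL_lnGLL[OF y] d g using Ap
    by (simp add: field_simps)
qed

lemma curv: assumes x: "x \<in> Om" shows "gauss_curv f x = -4"
proof -
  have Ap: "sA x > 0" unfolding sA_def using A_pos[OF x] .
  have d: "detG f x = (sA x * sB x - (sC x)^2) / 16" unfolding sA_def sB_def sC_def by (rule detG_eq[OF x])
  have qp: "sA x * sB x - (sC x)^2 > 0" using det_pos[OF x] d by simp
  have "gauss_curv f x = 1 / sqrt (detG f x) * dR Hf x"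
    unfolding gauss_curv_def by (subst dR_cong[OF S x h_eq]) auto
  also have "dR Hf x = (let w = (1/2, -1/2 :: real) in
      ((- frechet_derivative s2 (at x) w / 4 + ((frechet_derivative sC (at x) w * s1 x + sC x * frechet_derivative s1 (at x) w) * (4 * sA x) - sC x * s1 x * (4 * frechet_derivative sA (at x) w)) / (4 * sA x)^2)
             * sqrt ((sA x * sB x - (sC x)^2) / 16)
           - (- s2 x / 4 + sC x * s1 x / (4 * sA x))
             * (((frechet_derivative sA (at x) w * sB x + sA x * frechet_derivative sB (at x) w - 2 * sC x * frechet_derivative sC (at x) w) / 16) / (2 * sqrt ((sA x * sB x - (sC x)^2) / 16))))
          / (sqrt ((sA x * sB x - (sC x)^2) / 16))^2)"
    unfolding Let_def Hf_def[abs_def]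
    by (rule dR_has[OF Hf_deriv[OF smooth_has[OF sm_s(1) S x] smooth_has[OF sm_s(2) S x]
          smooth_has[OF sm_s(3) S x] smooth_has[OF sm_s(4) S x] smooth_has[OF sm_s(5) S x] Ap qp]])
  also have "\<dots> = ((- (dL (dL nn) x \<bullet> dR (dR nn) x - (sC x)\<^sup>2) / 4 + (((dL nn x \<bullet> dR (dR nn) x) * s1 x + sC x * 0) * (4 * sA x) - sC x * s1 x * (4 * 0)) / (4 * sA x)^2)
             * sqrt ((sA x * sB x - (sC x)^2) / 16)
           - (- s2 x / 4 + sC x * s1 x / (4 * sA x))
             * (((0 * sB x + sA x * (2 * (dR nn x \<bullet> dR (dR nn) x)) - 2 * sC x * (dL nn x \<bullet> dR (dR nn) x)) / 16) / (2 * sqrt ((sA x * sB x - (sC x)^2) / 16))))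
          / (sqrt ((sA x * sB x - (sC x)^2) / 16))^2"
    unfolding Let_def
    by (simp only: dR_fd[OF sm_s(1) S x, symmetric] dR_fd[OF sm_s(2) S x, symmetric]
        dR_fd[OF sm_s(3) S x, symmetric] dR_fd[OF sm_s(4) S x, symmetric] dR_fd[OF sm_s(5) S x, symmetric]
        dR_sA[OF x] dR_sB[OF x] dR_sC[OF x] dR_s1[OF x] dR_s2[OF x])
  also have "1 / sqrt (detG f x) = 1 / sqrt ((sA x * sB x - (sC x)^2) / 16)" using d by simp
  finally have K: "gauss_curv f x = 1 / sqrt ((sA x * sB x - (sC x)^2) / 16) * (((- (dL (dL nn) x \<bullet> dR (dR nn) x - (sC x)\<^sup>2) / 4 + (((dL nn x \<bullet> dR (dR nn) x) * s1 x + sC x * 0) * (4 * sA x) - sC x * s1 x * (4 * 0)) / (4 * sA x)^2)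
             * sqrt ((sA x * sB x - (sC x)^2) / 16)
           - (- s2 x / 4 + sC x * s1 x / (4 * sA x))
             * (((0 * sB x + sA x * (2 * (dR nn x \<bullet> dR (dR nn) x)) - 2 * sC x * (dL nn x \<bullet> dR (dR nn) x)) / 16) / (2 * sqrt ((sA x * sB x - (sC x)^2) / 16))))
          / (sqrt ((sA x * sB x - (sC x)^2) / 16))^2)" .
  have key: "(sA x * sB x - (sC x)^2) * ((dL (dL nn) x \<bullet> dR (dR nn) x) - sA x * sB x)
     = (s1 x * sB x - s2 x * sC x) * (dL nn x \<bullet> dR (dR nn) x) + (s2 x * sA x - s1 x * sC x) * (dR nn x \<bullet> dR (dR nn) x)"
    unfolding sA_def sB_def sC_def s1_def s2_def
    using key_geom[OF nn_norm[OF x] na[OF x] nb[OF x] nc[OF x] nd[OF x]]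
    by (simp add: inner_commute)
  show ?thesis unfolding K
    by (rule final_alg[OF Ap qp refl key])
qed

end

theorem mainTheorem2:
  fixes \<Omega> :: "(real \<times> real) set" and f :: "real \<times> real \<Rightarrow> complex^2"
  assumes "open \<Omega>" and "connected \<Omega>" and "simply_connected \<Omega>"
    and "\<forall>x\<in>\<Omega>. f x \<noteq> 0"
    and "smooth_on \<Omega> f"
    and "\<forall>x\<in>\<Omega>. CP1_EL f x"
    and "\<forall>x\<in>\<Omega>. detG f x \<noteq> 0"
  shows "\<forall>x\<in>\<Omega>. gauss_curv f x = -4"
proof -
  interpret sig2 \<Omega> f
    by unfold_locales (use assms in auto)
  show ?thesis using curv by blast
qed

end
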